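(* Let $\psi:N^2\to\mathbb{R}^3$, $(v,w)\mapsto(v,w,f(v,w))$, be a hyperbolic paraboloid with affine normal $(0,0,1)$. Define $\varphi(t,v,w)=(tv,tw,tf(v,w)-ct^4,t)$ or $\varphi(t,v,w)=(v,w,f(v,w)+ct^3,t^4)$, where $t\in\mathbb{R}^+$ and $c\neq0$. Then $\varphi$ defines a $3$-dimensional indefinite improper affine hypersphere which admits a pointwise $\mathrm{SO}(1,1)$-symmetry.
   Context: Setting: for a nondegenerate hypersurface $\varphi:M^3\to\mathbb{R}^4$ with Blaschke normal $\xi$, $D_X\varphi_*Y=\varphi_*(\nabla_XY)+h(X,Y)\xi$ and $D_X\xi=-\varphi_*(SX)$ define affine metric $h$ and shape operator $S$; $K=\nabla-\hat\nabla$ is the difference tensor ($\hat\nabla$ Levi-Civita of $h$). Affine hypersphere: $S=H\,\mathrm{Id}$, $H$ constant; improper if $H=0$; indefinite if $h$ is indefinite (Lorentzian). Pointwise $G$-symmetry: for every $p$ the group of $h_p$-isometries $L$ of $T_pM$ with $\det L=1$ and $K_p(LX,LY)=LK_p(X,Y)$ is isomorphic to $G$. *)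

theory Defs
  imports "HOL-Analysis.Analysis" "HOL-Algebra.Group"
begin

text \<open>Coordinates: a point of the parameter domain is p :: real^3; the coordinate
  vector fields are the partial derivatives in the directions axis i 1.
  The tangent space T_pM is identified with real^3 via the coordinate basis.\<close>

definition pd :: "(real^3 \<Rightarrow> 'a::real_normed_vector) \<Rightarrow> 3 \<Rightarrow> real^3 \<Rightarrow> 'a" where
  "pd F i p = vector_derivative (\<lambda>s. F (p + s *\<^sub>R axis i 1)) (at 0)"

definition frame_det :: "(real^3 \<Rightarrow> real^4) \<Rightarrow> (real^3 \<Rightarrow> real^4) \<Rightarrow> real^3 \<Rightarrow> real" where
  "frame_det \<phi> \<xi> p = det ((\<chi> r. if r = (1::4) then pd \<phi> 1 p else if r = 2 then pd \<phi> 2 p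
                                 else if r = 3 then pd \<phi> 3 p else \<xi> p) :: real^4^4)"

text \<open>Blaschke structure of \<phi> on the open domain U: xi is the Blaschke (affine) normal,
  h p the matrix of the affine metric (h p $ i $ j = h(d_i,d_j)), \<Gamma> p i j $ k the
  coefficients of the induced connection (nabla_{d_i} d_j = sum_k \<Gamma> p i j $ k d_k) and
  S p the matrix of the shape operator (S d_i = sum_k S p $ k $ i d_k).
  Equations: D_X phi_* Y = phi_*(nabla_X Y) + h(X,Y) xi,  D_X xi = - phi_*(S X);
  nondegenerate h; Blaschke normalisation theta = +- omega_h, i.e.
  det(phi_1,phi_2,phi_3,xi)^2 = |det h|.\<close>
definition blaschke_structure ::
  "(real^3) set \<Rightarrow> (real^3 \<Rightarrow> real^4) \<Rightarrow> (real^3 \<Rightarrow> real^4) \<Rightarrow> (real^3 \<Rightarrow> real^3^3)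
    \<Rightarrow> (real^3 \<Rightarrow> 3 \<Rightarrow> 3 \<Rightarrow> real^3) \<Rightarrow> (real^3 \<Rightarrow> real^3^3) \<Rightarrow> bool" where
  "blaschke_structure U \<phi> \<xi> h \<Gamma> S \<longleftrightarrow>
     open U \<and>
     \<phi> differentiable_on U \<and> (\<forall>i. pd \<phi> i differentiable_on U) \<and>
     \<xi> differentiable_on U \<and> (\<forall>i j. (\<lambda>q. h q $ i $ j) differentiable_on U) \<and>
     (\<forall>p\<in>U.
        frame_det \<phi> \<xi> p \<noteq> 0 \<and>
        (\<forall>i j. pd (pd \<phi> j) i p = (\<Sum>k\<in>UNIV. (\<Gamma> p i j $ k) *\<^sub>R pd \<phi> k p) + (h p $ i $ j) *\<^sub>R \<xi> p) \<and>
        (\<forall>i. pd \<xi> i p = - (\<Sum>k\<in>UNIV. (S p $ k $ i) *\<^sub>R pd \<phi> k p)) \<and>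
        det (h p) \<noteq> 0 \<and>
        (frame_det \<phi> \<xi> p)\<^sup>2 = \<bar>det (h p)\<bar>)"

definition has_blaschke_normal :: "(real^3) set \<Rightarrow> (real^3 \<Rightarrow> real^4) \<Rightarrow> bool" where
  "has_blaschke_normal U \<phi> \<longleftrightarrow> (\<exists>\<xi> h \<Gamma> S. blaschke_structure U \<phi> \<xi> h \<Gamma> S)"

text \<open>Affine hypersphere: S = H Id with H constant; improper: H = 0.\<close>
definition improper_affine_hypersphere :: "(real^3) set \<Rightarrow> (real^3 \<Rightarrow> real^4) \<Rightarrow> bool" where
  "improper_affine_hypersphere U \<phi> \<longleftrightarrow> has_blaschke_normal U \<phi> \<and>
     (\<forall>\<xi> h \<Gamma> S. blaschke_structure U \<phi> \<xi> h \<Gamma> S \<longrightarrow> (\<forall>p\<in>U. S p = 0))"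

definition indefinite_form :: "real^3^3 \<Rightarrow> bool" where
  "indefinite_form H \<longleftrightarrow> (\<exists>X. X \<bullet> (H *v X) > 0) \<and> (\<exists>Y. Y \<bullet> (H *v Y) < 0)"

definition indefinite_hypersurface :: "(real^3) set \<Rightarrow> (real^3 \<Rightarrow> real^4) \<Rightarrow> bool" where
  "indefinite_hypersurface U \<phi> \<longleftrightarrow>
     (\<forall>\<xi> h \<Gamma> S. blaschke_structure U \<phi> \<xi> h \<Gamma> S \<longrightarrow> (\<forall>p\<in>U. indefinite_form (h p)))"

definition lc_christoffel :: "(real^3 \<Rightarrow> real^3^3) \<Rightarrow> real^3 \<Rightarrow> 3 \<Rightarrow> 3 \<Rightarrow> real^3" where
  "lc_christoffel h p i j = (\<chi> k. (1/2) * (\<Sum>l\<in>UNIV. matrix_inv (h p) $ k $ l *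
      (pd (\<lambda>q. h q $ j $ l) i p + pd (\<lambda>q. h q $ i $ l) j p - pd (\<lambda>q. h q $ i $ j) l p)))"

definition diff_tensor :: "(real^3 \<Rightarrow> real^3^3) \<Rightarrow> (real^3 \<Rightarrow> 3 \<Rightarrow> 3 \<Rightarrow> real^3) \<Rightarrow> real^3
                             \<Rightarrow> real^3 \<Rightarrow> real^3 \<Rightarrow> real^3" where
  "diff_tensor h \<Gamma> p X Y = (\<Sum>i\<in>UNIV. \<Sum>j\<in>UNIV. (X $ i * Y $ j) *\<^sub>R (\<Gamma> p i j - lc_christoffel h p i j))"

definition sym_group :: "real^3^3 \<Rightarrow> (real^3 \<Rightarrow> real^3 \<Rightarrow> real^3) \<Rightarrow> (real^3^3) monoid" where
  "sym_group H K = \<lparr> carrier = {L. transpose L ** H ** L = H \<and> det L = 1 \<and>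
                          (\<forall>X Y. K (L *v X) (L *v Y) = L *v K X Y)},
                     mult = (\<lambda>A B. A ** B), one = mat 1 \<rparr>"

definition J11 :: "real^2^2" where
  "J11 = (\<chi> i j. if i = j then (if i = 1 then 1 else -1) else 0)"

definition SO11 :: "(real^2^2) monoid" where
  "SO11 = \<lparr> carrier = {A. transpose A ** J11 ** A = J11 \<and> det A = 1},
            mult = (\<lambda>A B. A ** B), one = mat 1 \<rparr>"

text \<open>Isomorphism of (closed linear) matrix groups: a group isomorphism which is a
  homeomorphism (for closed matrix groups this is the same as a Lie group isomorphism).\<close>
definition matrix_group_iso :: "('a::topological_space) monoid \<Rightarrow> ('b::topological_space) monoid \<Rightarrow> bool" where
  "matrix_group_iso G H \<longleftrightarrow>
     (\<exists>g g'. g \<in> hom G H \<and> homeomorphism (carrier G) (carrier H) g g')"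

definition pointwise_symmetry :: "(real^3) set \<Rightarrow> (real^3 \<Rightarrow> real^4) \<Rightarrow> ('b::topological_space) monoid \<Rightarrow> bool" where
  "pointwise_symmetry U \<phi> G \<longleftrightarrow>
     (\<forall>\<xi> h \<Gamma> S. blaschke_structure U \<phi> \<xi> h \<Gamma> S \<longrightarrow>
        (\<forall>p\<in>U. matrix_group_iso (sym_group (h p) (diff_tensor h \<Gamma> p)) G))"

text \<open>psi(v,w) = (v,w,f(v,w)) is (an open piece of) a hyperbolic paraboloid with affine
  normal (0,0,1): f is quadratic with constant Hessian of determinant -1.\<close>
definition hyperbolic_paraboloid_graph :: "(real \<times> real) set \<Rightarrow> (real \<Rightarrow> real \<Rightarrow> real) \<Rightarrow> bool" where
  "hyperbolic_paraboloid_graph N f \<longleftrightarrow> open N \<and> N \<noteq> {} \<and>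
     (\<exists>a b d e g k. a * d - b\<^sup>2 = -1 \<and>
        (\<forall>(v,w)\<in>N. f v w = (a * v\<^sup>2 + 2 * b * v * w + d * w\<^sup>2) / 2 + e * v + g * w + k))"

end

theory Submission
  imports Defs
begin


lemma vector_4 [simp]:
 "(vector [x,y,z,w] ::('a::zero)^4)$1 = x"
 "(vector [x,y,z,w] ::('a::zero)^4)$2 = y"
 "(vector [x,y,z,w] ::('a::zero)^4)$3 = z"
 "(vector [x,y,z,w] ::('a::zero)^4)$4 = w"
  unfolding vector_def by simp_all

lemma  det_4:
  "det (A::'a::comm_ring_1^4^4) =
     A$1$1 * (A$2$2 * A$3$3 * A$4$4 + A$2$3 * A$3$4 * A$4$2 + A$2$4 * A$3$2 * A$4$3
            - A$2$2 * A$3$4 * A$4$3 - A$2$3 * A$3$2 * A$4$4 - A$2$4 * A$3$3 * A$4$2)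
   - A$1$2 * (A$2$1 * A$3$3 * A$4$4 + A$2$3 * A$3$4 * A$4$1 + A$2$4 * A$3$1 * A$4$3
            - A$2$1 * A$3$4 * A$4$3 - A$2$3 * A$3$1 * A$4$4 - A$2$4 * A$3$3 * A$4$1)
   + A$1$3 * (A$2$1 * A$3$2 * A$4$4 + A$2$2 * A$3$4 * A$4$1 + A$2$4 * A$3$1 * A$4$2
            - A$2$1 * A$3$4 * A$4$2 - A$2$2 * A$3$1 * A$4$4 - A$2$4 * A$3$2 * A$4$1)
   - A$1$4 * (A$2$1 * A$3$2 * A$4$3 + A$2$2 * A$3$3 * A$4$1 + A$2$3 * A$3$1 * A$4$2
            - A$2$1 * A$3$3 * A$4$2 - A$2$2 * A$3$1 * A$4$3 - A$2$3 * A$3$2 * A$4$1)"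
proof -
  have f1: "finite {2::4, 3, 4}" "1 \<notin> {2::4, 3, 4}" by auto
  have f2: "finite {3::4, 4}" "2 \<notin> {3::4, 4}" by auto
  have f3: "finite {4::4}" "3 \<notin> {4::4}" by auto
  show ?thesis
    unfolding det_def UNIV_4
    unfolding sum_over_permutations_insert[OF f1]
    unfolding sum_over_permutations_insert[OF f2]
    unfolding sum_over_permutations_insert[OF f3]
    unfolding permutes_sing
    by (simp add: sign_swap_id permutation_swap_id permutation_compose sign_compose sign_id swap_id_eq algebra_simps)
qed

lemma so_poly:
  fixes a b d m11 m12 m21 m22 :: real
  assumes Q: "a*d - b^2 = -1"
   and e1: "m11*(a*m11 + b*m21) + m21*(b*m11 + d*m21) = a"
   and e2: "m11*(a*m12 + b*m22) + m21*(b*m12 + d*m22) = b"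
   and e3: "m12*(a*m12 + b*m22) + m22*(b*m12 + d*m22) = d"
   and dt: "m11*m22 - m12*m21 = 1"
  shows "m11 = (m11+m22)/2 + ((b*m11 + d*m21 - a*m12 - b*m22)/2) * b"
        "m22 = (m11+m22)/2 - ((b*m11 + d*m21 - a*m12 - b*m22)/2) * b"
        "m12 = ((b*m11 + d*m21 - a*m12 - b*m22)/2) * d"
        "m21 = - ((b*m11 + d*m21 - a*m12 - b*m22)/2) * a"
  using assms by algebra+



definition Qf :: "real \<Rightarrow> real \<Rightarrow> real \<Rightarrow> 3 \<Rightarrow> 3 \<Rightarrow> real" where
  "Qf a b d i j = (if i = 2 \<and> j = 2 then a else if i = 3 \<and> j = 3 then d else b)"

definition blk :: "real \<Rightarrow> real \<Rightarrow> real \<Rightarrow> real \<Rightarrow> real \<Rightarrow> real^3^3" where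
  "blk A B a b d = (\<chi> i j. if i = 1 \<and> j = 1 then A else if i = 1 \<or> j = 1 then 0 else B * Qf a b d i j)"

definition qf :: "real \<Rightarrow> real \<Rightarrow> real \<Rightarrow> real^3 \<Rightarrow> real^3 \<Rightarrow> real" where
  "qf a b d X Y = a*X$2*Y$2 + b*(X$2*Y$3 + X$3*Y$2) + d*X$3*Y$3"

definition Kf :: "real \<Rightarrow> real \<Rightarrow> real \<Rightarrow> real \<Rightarrow> real \<Rightarrow> real^3 \<Rightarrow> real^3 \<Rightarrow> real^3" where
  "Kf \<alpha> \<kappa> a b d X Y = vector [\<alpha>*X$1*Y$1 + \<kappa>*qf a b d X Y, -(\<alpha>/2)*(X$1*Y$2+Y$1*X$2), -(\<alpha>/2)*(X$1*Y$3+Y$1*X$3)]"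

definition Lm :: "real \<Rightarrow> real \<Rightarrow> real \<Rightarrow> real \<Rightarrow> real \<Rightarrow> real^3^3" where
  "Lm a b d x y = (\<chi> i j. if i = 1 \<and> j = 1 then 1 else if i = 1 \<or> j = 1 then 0
      else if i = 2 \<and> j = 2 then x + y*b else if i = 3 \<and> j = 3 then x - y*b
      else if i = 2 then y*d else -y*a)"

lemma Lm_nth:
  "Lm a b d x y $ 1 $ 1 = 1" "Lm a b d x y $ 1 $ 2 = 0" "Lm a b d x y $ 1 $ 3 = 0"
  "Lm a b d x y $ 2 $ 1 = 0" "Lm a b d x y $ 3 $ 1 = 0"
  "Lm a b d x y $ 2 $ 2 = x + y*b" "Lm a b d x y $ 3 $ 3 = x - y*b"
  "Lm a b d x y $ 2 $ 3 = y*d" "Lm a b d x y $ 3 $ 2 = -y*a"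
  by (simp_all add: Lm_def)

lemma blk_nth:
  "blk A B a b d $ 1 $ 1 = A" "blk A B a b d $ 1 $ 2 = 0" "blk A B a b d $ 1 $ 3 = 0"
  "blk A B a b d $ 2 $ 1 = 0" "blk A B a b d $ 3 $ 1 = 0"
  "blk A B a b d $ 2 $ 2 = B*a" "blk A B a b d $ 3 $ 3 = B*d"
  "blk A B a b d $ 2 $ 3 = B*b" "blk A B a b d $ 3 $ 2 = B*b"
  by (simp_all add: blk_def Qf_def)

lemma mat3_eq: "(M::real^3^3) = N \<longleftrightarrow> (\<forall>i j. M$i$j = N$i$j)"
  by (simp add: vec_eq_iff)

lemma carrier_sym_fwd:
  fixes L :: "real^3^3"
  assumes Q: "a*d - b^2 = -1" and nz: "A \<noteq> 0" "B \<noteq> 0" "\<alpha> \<noteq> 0"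
    and iso: "transpose L ** blk A B a b d ** L = blk A B a b d"
    and dt: "det L = 1"
    and KK: "\<forall>X Y. Kf \<alpha> \<kappa> a b d (L *v X) (L *v Y) = L *v Kf \<alpha> \<kappa> a b d X Y"
  shows "\<exists>x y. L = Lm a b d x y \<and> x^2 - y^2 = 1"
proof -
  have iso_e: "(transpose L ** blk A B a b d ** L) $ i $ j = blk A B a b d $ i $ j" for i j
    using iso by simp
  note ms = matrix_matrix_mult_def transpose_def sum_3 blk_nth
  have i11: "A*L$1$1^2 + B*(a*L$2$1^2 + 2*b*L$2$1*L$3$1 + d*L$3$1^2) = A"
    using iso_e[of 1 1] by (simp add: ms power2_eq_square algebra_simps)
  have K1: "Kf \<alpha> \<kappa> a b d (L *v axis 1 1) (L *v axis 1 1) = L *v Kf \<alpha> \<kappa> a b d (axis 1 1) (axis 1 1)"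
    using KK by blast
  have Le1: "L *v axis 1 1 = vector [L$1$1, L$2$1, L$3$1]"
    by (simp add: vec_eq_iff forall_3 matrix_vector_mult_def sum_3 axis_def)
  have Ke1: "Kf \<alpha> \<kappa> a b d (axis 1 1) (axis 1 1) = vector [\<alpha>, 0, 0]"
    by (simp add: Kf_def qf_def axis_def)
  have LKe1: "L *v vector [\<alpha>, 0, 0] = vector [\<alpha>*L$1$1, \<alpha>*L$2$1, \<alpha>*L$3$1]"
    by (simp add: vec_eq_iff forall_3 matrix_vector_mult_def sum_3 mult.commute)
  have K1': "Kf \<alpha> \<kappa> a b d (vector [L$1$1, L$2$1, L$3$1]) (vector [L$1$1, L$2$1, L$3$1])
     = vector [\<alpha>*L$1$1, \<alpha>*L$2$1, \<alpha>*L$3$1]"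
    using K1 unfolding Le1 Ke1 LKe1 .
  have k1: "\<alpha>*L$1$1*L$1$1 + \<kappa>*(a*L$2$1*L$2$1 + b*(L$2$1*L$3$1 + L$3$1*L$2$1) + d*L$3$1*L$3$1) = \<alpha>*L$1$1"
    and k2: "-(\<alpha>/2)*(L$1$1*L$2$1+L$1$1*L$2$1) = \<alpha>*L$2$1"
    and k3: "-(\<alpha>/2)*(L$1$1*L$3$1+L$1$1*L$3$1) = \<alpha>*L$3$1"
    using K1'[unfolded vec_eq_iff forall_3] by (simp_all add: Kf_def qf_def)
  have c23: "L$2$1 = 0 \<and> L$3$1 = 0 \<and> L$1$1 = 1"
  proof (cases "L$1$1 = -1")
    case True
    have "a*L$2$1^2 + 2*b*L$2$1*L$3$1 + d*L$3$1^2 = 0"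
      using i11 True nz by (simp add: power2_eq_square)
    then have "\<alpha> = -\<alpha>" using k1 True by (simp add: power2_eq_square algebra_simps)
    then show ?thesis using nz by simp
  next
    case False
    have "\<alpha> * (L$2$1 * (L$1$1 + 1)) = 0" using k2 by (simp add: algebra_simps)
    then have "L$2$1 * (L$1$1 + 1) = 0" using nz(3) by simp
    then have z2: "L$2$1 = 0" using False by (auto simp: add_eq_0_iff2)
    have "\<alpha> * (L$3$1 * (L$1$1 + 1)) = 0" using k3 by (simp add: algebra_simps)
    then have "L$3$1 * (L$1$1 + 1) = 0" using nz(3) by simp
    then have z3: "L$3$1 = 0" using False by (auto simp: add_eq_0_iff2)
    have "L$1$1*L$1$1 = L$1$1" using k1 z2 z3 nz by simp
    moreover have "L$1$1^2 = 1" using i11 z2 z3 nz by simp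
    ultimately show ?thesis using z2 z3 by (auto simp: power2_eq_square)
  qed
  have r12: "L$1$2 = 0" using iso_e[of 1 2] c23 nz by (simp add: ms)
  have r13: "L$1$3 = 0" using iso_e[of 1 3] c23 nz by (simp add: ms)
  have "B*(L$2$2*(a*L$2$2 + b*L$3$2) + L$3$2*(b*L$2$2 + d*L$3$2)) = B*a"
    using iso_e[of 2 2] c23 r12 r13 nz by (simp add: ms algebra_simps)
  then have e1: "L$2$2*(a*L$2$2 + b*L$3$2) + L$3$2*(b*L$2$2 + d*L$3$2) = a" using nz(2) by simp
  have "B*(L$2$2*(a*L$2$3 + b*L$3$3) + L$3$2*(b*L$2$3 + d*L$3$3)) = B*b"
    using iso_e[of 2 3] c23 r12 r13 nz by (simp add: ms algebra_simps)
  then have e2: "L$2$2*(a*L$2$3 + b*L$3$3) + L$3$2*(b*L$2$3 + d*L$3$3) = b" using nz(2) by simp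
  have "B*(L$2$3*(a*L$2$3 + b*L$3$3) + L$3$3*(b*L$2$3 + d*L$3$3)) = B*d"
    using iso_e[of 3 3] c23 r12 r13 nz by (simp add: ms algebra_simps)
  then have e3: "L$2$3*(a*L$2$3 + b*L$3$3) + L$3$3*(b*L$2$3 + d*L$3$3) = d" using nz(2) by simp
  have d1: "L$2$2*L$3$3 - L$2$3*L$3$2 = 1"
    using dt c23 r12 r13 by (simp add: det_3)
  define x where "x = (L$2$2 + L$3$3)/2"
  define y where "y = (b*L$2$2 + d*L$3$2 - a*L$2$3 - b*L$3$3)/2"
  have s: "L$2$2 = x + y*b" "L$3$3 = x - y*b" "L$2$3 = y*d" "L$3$2 = -y*a"
    using so_poly[OF Q e1 e2 e3 d1] unfolding x_def y_def by (simp_all add: algebra_simps)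
  have "x^2 - y^2 = 1" using d1 Q unfolding s by algebra
  moreover have "L = Lm a b d x y"
    unfolding mat3_eq forall_3 using s c23 r12 r13 by (simp add: Lm_nth)
  ultimately show ?thesis by blast
qed


definition Sm :: "real \<Rightarrow> real \<Rightarrow> real^2^2" where
  "Sm x y = (\<chi> i j. if i = j then x else -y)"

lemma Sm_nth: "Sm x y $ 1 $ 1 = x" "Sm x y $ 2 $ 2 = x" "Sm x y $ 1 $ 2 = -y" "Sm x y $ 2 $ 1 = -y"
  by (simp_all add: Sm_def)

lemma mat2_eq: "(M::real^2^2) = N \<longleftrightarrow> (\<forall>i j. M$i$j = N$i$j)"
  by (simp add: vec_eq_iff)

lemma J11_nth: "J11 $ 1 $ 1 = 1" "J11 $ 2 $ 2 = -1" "J11 $ 1 $ 2 = 0" "J11 $ 2 $ 1 = 0"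
  by (simp_all add: J11_def)

lemma carrier_sym_bwd:
  assumes Q: "a*d - b^2 = -1" and xy: "x^2 - y^2 = 1"
  shows "transpose (Lm a b d x y) ** blk A B a b d ** Lm a b d x y = blk A B a b d"
    "det (Lm a b d x y) = 1"
    "\<forall>X Y. Kf \<alpha> \<kappa> a b d (Lm a b d x y *v X) (Lm a b d x y *v Y) = Lm a b d x y *v Kf \<alpha> \<kappa> a b d X Y"
proof -
  show "transpose (Lm a b d x y) ** blk A B a b d ** Lm a b d x y = blk A B a b d"
    unfolding mat3_eq forall_3
    apply (simp add: matrix_matrix_mult_def transpose_def sum_3 blk_nth Lm_nth)
    apply (intro conjI)
    apply (use Q xy in algebra)+
    done
  show "det (Lm a b d x y) = 1"
    using Q xy by (simp add: det_3 Lm_nth) algebra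
  show "\<forall>X Y. Kf \<alpha> \<kappa> a b d (Lm a b d x y *v X) (Lm a b d x y *v Y) = Lm a b d x y *v Kf \<alpha> \<kappa> a b d X Y"
    apply (intro allI)
    unfolding vec_eq_iff forall_3
    apply (simp add: Kf_def qf_def matrix_vector_mult_def sum_3 Lm_nth)
    apply (intro conjI)
     apply (use Q xy in algebra)
    apply (simp_all add: field_simps)
    done
qed

lemma carrier_sym:
  assumes Q: "a*d - b^2 = -1" and nz: "A \<noteq> 0" "B \<noteq> 0" "\<alpha> \<noteq> 0"
  shows "carrier (sym_group (blk A B a b d) (Kf \<alpha> \<kappa> a b d)) = {Lm a b d x y | x y. x^2 - y^2 = 1}"
  using carrier_sym_fwd[OF Q nz] carrier_sym_bwd[OF Q]
  by (auto simp: sym_group_def)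

lemma carrier_SO11: "carrier SO11 = {Sm x y | x y. x^2 - y^2 = 1}"
proof -
  have fwd: "\<exists>x y. M = Sm x y \<and> x^2 - y^2 = 1" if "transpose M ** J11 ** M = J11" "det M = 1" for M
  proof -
    have e: "(transpose M ** J11 ** M) $ i $ j = J11 $ i $ j" for i j using that by simp
    note ms = matrix_matrix_mult_def transpose_def sum_2 J11_nth
    have e1: "M$1$1*(1*M$1$1 + 0*M$2$1) + M$2$1*(0*M$1$1 + (-1)*M$2$1) = 1"
      using e[of 1 1] by (simp add: ms algebra_simps)
    have e2: "M$1$1*(1*M$1$2 + 0*M$2$2) + M$2$1*(0*M$1$2 + (-1)*M$2$2) = 0"
      using e[of 1 2] by (simp add: ms algebra_simps)
    have e3: "M$1$2*(1*M$1$2 + 0*M$2$2) + M$2$2*(0*M$1$2 + (-1)*M$2$2) = -1"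
      using e[of 2 2] by (simp add: ms algebra_simps)
    have d1: "M$1$1*M$2$2 - M$1$2*M$2$1 = 1" using that(2) by (simp add: det_2)
    have Q: "1*(-1) - (0::real)^2 = -1" by simp
    note sp = so_poly[OF Q e1 e2 e3 d1]
    define x where "x = (M$1$1 + M$2$2)/2"
    define y where "y = -(M$1$2 + M$2$1)/2"
    have s: "M$1$1 = x" "M$2$2 = x" "M$1$2 = -y" "M$2$1 = -y"
      using sp unfolding x_def y_def by (simp_all add: algebra_simps)
    have "x^2 - y^2 = 1" using d1 unfolding s by (simp add: power2_eq_square)
    moreover have "M = Sm x y" unfolding mat2_eq forall_2 using s by (simp add: Sm_nth)
    ultimately show ?thesis by blast
  qed
  have bwd: "transpose (Sm x y) ** J11 ** Sm x y = J11 \<and> det (Sm x y) = 1" if "x^2 - y^2 = 1" for x y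
    using that unfolding mat2_eq forall_2
    by (simp add: matrix_matrix_mult_def transpose_def sum_2 J11_nth Sm_nth det_2 power2_eq_square algebra_simps)
  show ?thesis using fwd bwd by (auto simp: SO11_def)
qed

definition gm :: "real \<Rightarrow> real \<Rightarrow> real \<Rightarrow> real^3^3 \<Rightarrow> real^2^2" where
  "gm a b d L = Sm ((L$2$2 + L$3$3)/2) ((b*L$2$2 + d*L$3$2 - a*L$2$3 - b*L$3$3)/2)"

definition gi :: "real \<Rightarrow> real \<Rightarrow> real \<Rightarrow> real^2^2 \<Rightarrow> real^3^3" where
  "gi a b d M = Lm a b d ((M$1$1 + M$2$2)/2) (-(M$1$2 + M$2$1)/2)"

lemma gm_Lm: assumes Q: "a*d - b^2 = -1" shows "gm a b d (Lm a b d x y) = Sm x y"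
proof -
  have "b*(x + y*b) + d*(-y*a) - a*(y*d) - b*(x - y*b) = 2*y" using Q by algebra
  then show ?thesis unfolding gm_def Lm_nth by simp
qed

lemma gi_Sm: "gi a b d (Sm x y) = Lm a b d x y"
  unfolding gi_def Sm_nth by simp

lemma Lm_mult: "a*d - b^2 = -1 \<Longrightarrow>
   Lm a b d x1 y1 ** Lm a b d x2 y2 = Lm a b d (x1*x2 + y1*y2) (x1*y2 + y1*x2)"
  unfolding mat3_eq forall_3
  apply (simp add: matrix_matrix_mult_def sum_3 Lm_nth)
  apply (intro conjI)
  apply (simp_all add: algebra_simps)
  apply algebra+
  done

lemma Sm_mult: "Sm x1 y1 ** Sm x2 y2 = Sm (x1*x2 + y1*y2) (x1*y2 + y1*x2)"
  unfolding mat2_eq forall_2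
  by (simp add: matrix_matrix_mult_def sum_2 Sm_nth algebra_simps)

lemma cont_if: "continuous_on S f \<Longrightarrow> continuous_on S g \<Longrightarrow> continuous_on S (\<lambda>x. if P then f x else g x)"
  by (cases P) auto

lemma cont_Sm:
  assumes "continuous_on S f" "continuous_on S g"
  shows "continuous_on S (\<lambda>z. Sm (f z) (g z))"
  unfolding Sm_def
  apply (rule continuous_on_vec_lambda)+
  subgoal for i j by (cases "i = j") (simp_all add: assms continuous_intros)
  done

lemma cont_Lm:
  assumes "continuous_on S f" "continuous_on S g"
  shows "continuous_on S (\<lambda>z. Lm a b d (f z) (g z))"
  unfolding Lm_def
  apply (rule continuous_on_vec_lambda)+
  subgoal for i j
    by (intro cont_if assms continuous_intros)
  done

lemma G2:
  assumes Q: "a*d - b^2 = -1" and nz: "A \<noteq> 0" "B \<noteq> 0" "\<alpha> \<noteq> 0"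
  shows "matrix_group_iso (sym_group (blk A B a b d) (Kf \<alpha> \<kappa> a b d)) SO11"
  unfolding matrix_group_iso_def
proof (intro exI conjI)
  note cs = carrier_sym[OF Q nz, of \<kappa>]
  show "gm a b d \<in> hom (sym_group (blk A B a b d) (Kf \<alpha> \<kappa> a b d)) SO11"
  proof -
    have 1: "gm a b d L \<in> carrier SO11" if "L \<in> carrier (sym_group (blk A B a b d) (Kf \<alpha> \<kappa> a b d))" for L
      using that by (auto simp: cs carrier_SO11 gm_Lm[OF Q]; blast)
    have 2: "gm a b d (L1 ** L2) = gm a b d L1 ** gm a b d L2"
      if "L1 \<in> carrier (sym_group (blk A B a b d) (Kf \<alpha> \<kappa> a b d))"
         "L2 \<in> carrier (sym_group (blk A B a b d) (Kf \<alpha> \<kappa> a b d))" for L1 L2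
      using that by (auto simp: cs gm_Lm[OF Q] Lm_mult[OF Q] Sm_mult)
    show ?thesis unfolding hom_def using 1 2 by (auto simp: sym_group_def SO11_def)
  qed
  show "homeomorphism (carrier (sym_group (blk A B a b d) (Kf \<alpha> \<kappa> a b d))) (carrier SO11) (gm a b d) (gi a b d)"
  proof (rule homeomorphismI)
    show "continuous_on (carrier (sym_group (blk A B a b d) (Kf \<alpha> \<kappa> a b d))) (gm a b d)"
      unfolding gm_def by (intro cont_Sm continuous_intros) auto
    show "continuous_on (carrier SO11) (gi a b d)"
      unfolding gi_def by (intro cont_Lm continuous_intros) auto
    show "gm a b d ` carrier (sym_group (blk A B a b d) (Kf \<alpha> \<kappa> a b d)) \<subseteq> carrier SO11"
      using Q by (auto simp: cs carrier_SO11 gm_Lm; blast)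
    show "gi a b d ` carrier SO11 \<subseteq> carrier (sym_group (blk A B a b d) (Kf \<alpha> \<kappa> a b d))"
      using Q by (auto simp: cs carrier_SO11 gi_Sm; blast)
    show "gi a b d (gm a b d x) = x" if "x \<in> carrier (sym_group (blk A B a b d) (Kf \<alpha> \<kappa> a b d))" for x
      using Q that by (auto simp: cs gm_Lm gi_Sm)
    show "gm a b d (gi a b d y) = y" if "y \<in> carrier SO11" for y
      using Q that by (auto simp: carrier_SO11 gm_Lm gi_Sm)
  qed
qed




lemma line_open: "open V \<Longrightarrow> open {s::real. p + s *\<^sub>R (e::real^3) \<in> V}"
  using continuous_open_vimage[of V "\<lambda>s. p + s *\<^sub>R e"]
  by (simp add: vimage_def continuous_intros)

lemma pd_hvd: "((\<lambda>s. F (p + s *\<^sub>R axis i 1)) has_vector_derivative D) (at 0) \<Longrightarrow> pd F i p = D"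
  unfolding pd_def by (rule vector_derivative_at)

lemma pd_local:
  assumes "open V" "p \<in> V" "\<And>q. q \<in> V \<Longrightarrow> F q = G q"
  shows "pd F i p = pd G i p"
proof -
  let ?W = "{s::real. p + s *\<^sub>R axis i 1 \<in> V}"
  have W: "open ?W" "0 \<in> ?W" using line_open[OF assms(1)] assms(2) by auto
  have "(\<lambda>D. ((\<lambda>s. F (p + s *\<^sub>R axis i 1)) has_vector_derivative D) (at 0)) =
        (\<lambda>D. ((\<lambda>s. G (p + s *\<^sub>R axis i 1)) has_vector_derivative D) (at 0))"
  proof (rule ext, rule iffI)
    fix D assume "((\<lambda>s. F (p + s *\<^sub>R axis i 1)) has_vector_derivative D) (at 0)"
    then show "((\<lambda>s. G (p + s *\<^sub>R axis i 1)) has_vector_derivative D) (at 0)"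
      by (rule has_vector_derivative_transform_within_open[OF _ W]) (simp add: assms(3))
  next
    fix D assume "((\<lambda>s. G (p + s *\<^sub>R axis i 1)) has_vector_derivative D) (at 0)"
    then show "((\<lambda>s. F (p + s *\<^sub>R axis i 1)) has_vector_derivative D) (at 0)"
      by (rule has_vector_derivative_transform_within_open[OF _ W]) (simp add: assms(3))
  qed
  then show ?thesis unfolding pd_def vector_derivative_def by simp
qed

lemma pd_works:
  assumes "F differentiable (at p)"
  shows "((\<lambda>s. F (p + s *\<^sub>R axis i 1)) has_vector_derivative pd F i p) (at 0)"
proof -
  have "(\<lambda>s::real. p + s *\<^sub>R axis i 1) differentiable (at 0)"
    by (intro derivative_intros)
  moreover have "F differentiable (at (p + 0 *\<^sub>R axis i 1))" using assms by simp
  ultimately have "(F \<circ> (\<lambda>s::real. p + s *\<^sub>R axis i 1)) differentiable (at 0)"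
    by (rule differentiable_chain_at)
  then show ?thesis unfolding pd_def
    by (simp add: vector_derivative_works[symmetric] o_def)
qed

lemma pd_const_near:
  assumes "open V" "p \<in> V" "\<And>q. q \<in> V \<Longrightarrow> F q = c"
  shows "pd F i p = 0"
proof -
  have "pd F i p = pd (\<lambda>q. c) i p" by (rule pd_local[OF assms])
  also have "\<dots> = 0" by (rule pd_hvd) simp
  finally show ?thesis .
qed

lemma hvd4:
  assumes "(f1 has_real_derivative d1) (at 0)" "(f2 has_real_derivative d2) (at 0)"
          "(f3 has_real_derivative d3) (at 0)" "(f4 has_real_derivative d4) (at 0)"
  shows "((\<lambda>s. vector [f1 s, f2 s, f3 s, f4 s] :: real^4) has_vector_derivative vector [d1, d2, d3, d4]) (at 0)"
proof -
  have e: "vector [x1, x2, x3, x4] = x1 *\<^sub>R axis 1 1 + x2 *\<^sub>R axis 2 1 + x3 *\<^sub>R axis 3 1 + (x4 *\<^sub>R axis 4 (1::real) :: real^4)" for x1 x2 x3 x4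
    by (simp add: vec_eq_iff forall_4 axis_def)
  show ?thesis unfolding e
    by (rule derivative_eq_intros assms has_vector_derivative_const refl | simp)+
qed

lemma differentiable_vec_nth [derivative_intros, simp]: "(\<lambda>x. x $ i) differentiable F"
  by (rule bounded_linear_imp_differentiable[OF bounded_linear_vec_nth])

lemma differentiable_vector4:
  assumes "f1 differentiable (at x within S)" "f2 differentiable (at x within S)" "f3 differentiable (at x within S)" "f4 differentiable (at x within S)"
  shows "(\<lambda>x. vector [f1 x, f2 x, f3 x, f4 x] :: real^4) differentiable (at x within S)"
proof -
  have e: "vector [x1, x2, x3, x4] = x1 *\<^sub>R axis 1 1 + x2 *\<^sub>R axis 2 1 + x3 *\<^sub>R axis 3 1 + (x4 *\<^sub>R axis 4 (1::real) :: real^4)" for x1 x2 x3 x4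
    by (simp add: vec_eq_iff forall_4 axis_def)
  show ?thesis unfolding e
    by (intro derivative_intros assms differentiable_scaleR)
qed

lemma differentiable_on_transform_open:
  assumes "f differentiable_on S" "open S" "\<And>x. x \<in> S \<Longrightarrow> f x = g x"
  shows "g differentiable_on S"
  using assms unfolding differentiable_on_eq_differentiable_at[OF assms(2)]
  by (metis differentiable_def has_derivative_transform_within_open)


definition rows4 :: "real^4 \<Rightarrow> real^4 \<Rightarrow> real^4 \<Rightarrow> real^4 \<Rightarrow> real^4^4" where
  "rows4 a b c x = (\<chi> r. if r = (1::4) then a else if r = 2 then b else if r = 3 then c else x)"

lemma frame_det_rows4:
  assumes "\<And>k. pd \<phi> k q = P k q"
  shows "frame_det \<phi> \<xi> q = det (rows4 (P 1 q) (P 2 q) (P 3 q) (\<xi> q))"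
  unfolding frame_det_def rows4_def assms by (rule refl)

lemma loc_const:
  fixes g :: "real^3 \<Rightarrow> real"
  assumes "continuous_on U g" "open U" "\<forall>y\<in>U. \<bar>g y\<bar> = m" "m > 0" "q \<in> U"
  shows "\<exists>\<epsilon>>0. ball q \<epsilon> \<subseteq> U \<and> (\<forall>y\<in>ball q \<epsilon>. g y = g q)"
proof -
  obtain e1 where e1: "e1 > 0" "ball q e1 \<subseteq> U" using assms(2,5) open_contains_ball by blast
  obtain e2 where e2: "e2 > 0" "\<forall>y\<in>U. dist y q < e2 \<longrightarrow> dist (g y) (g q) < m"
    using assms(1,4,5) unfolding continuous_on_iff by blast
  define \<epsilon> where "\<epsilon> = min e1 e2"
  have "g y = g q" if "y \<in> ball q \<epsilon>" for y
  proof -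
    have y: "y \<in> U" "dist y q < e2" using that e1 unfolding \<epsilon>_def by (auto simp: dist_commute)
    then have "\<bar>g y - g q\<bar> < m" using e2 by (simp add: dist_real_def)
    moreover have "\<bar>g y\<bar> = m" "\<bar>g q\<bar> = m" using assms(3,5) y by auto
    ultimately show ?thesis by (auto simp: abs_if split: if_splits)
  qed
  moreover have "ball q \<epsilon> \<subseteq> U" using e1 unfolding \<epsilon>_def by auto
  moreover have "\<epsilon> > 0" using e1 e2 unfolding \<epsilon>_def by auto
  ultimately show ?thesis by blast
qed

lemma analysis:
  fixes U :: "(real^3) set" and \<phi> \<xi> :: "real^3 \<Rightarrow> real^4" and h :: "real^3 \<Rightarrow> real^3^3"
    and \<Gamma> :: "real^3 \<Rightarrow> 3 \<Rightarrow> 3 \<Rightarrow> real^3" and S :: "real^3 \<Rightarrow> real^3^3"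
    and P :: "3 \<Rightarrow> real^3 \<Rightarrow> real^4" and P2 :: "3 \<Rightarrow> 3 \<Rightarrow> real^3 \<Rightarrow> real^4"
    and \<Omega> :: "real^3 \<Rightarrow> real^4" and d\<Omega> :: "3 \<Rightarrow> real^3 \<Rightarrow> real^4"
    and H0 :: "real^3 \<Rightarrow> real^3^3" and \<rho> :: "real^3 \<Rightarrow> real" and m \<nu> :: real and n :: "real^4"
  assumes bs: "blaschke_structure U \<phi> \<xi> h \<Gamma> S"
    and pdP: "\<forall>q\<in>U. \<forall>k. pd \<phi> k q = P k q"
    and pdP2: "\<forall>q\<in>U. \<forall>i j. pd (pd \<phi> j) i q = P2 i j q"
    and indep: "\<forall>q\<in>U. \<forall>c::real^3. (\<Sum>k\<in>UNIV. c$k *\<^sub>R P k q) = 0 \<longrightarrow> c = 0"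
    and \<Omega>P: "\<forall>q\<in>U. \<forall>k. \<Omega> q \<bullet> P k q = 0"
    and \<Omega>P2: "\<forall>q\<in>U. \<forall>i j. \<Omega> q \<bullet> P2 i j q = H0 q $ i $ j"
    and H11: "\<forall>q\<in>U. H0 q $ 1 $ 1 \<noteq> 0"
    and fd: "\<forall>q\<in>U. \<forall>x. det (rows4 (P 1 q) (P 2 q) (P 3 q) x) = \<rho> q * (\<Omega> q \<bullet> x)"
    and dH: "\<forall>q\<in>U. \<rho> q ^ 2 * m ^ 5 = \<bar>det (H0 q)\<bar>" "\<forall>q\<in>U. \<rho> q \<noteq> 0" "m > 0"
    and d\<Omega>: "\<forall>q\<in>U. \<forall>i. ((\<lambda>s. \<Omega> (q + s *\<^sub>R axis i 1)) has_vector_derivative d\<Omega> i q) (at 0)"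
    and span: "\<forall>q\<in>U. \<forall>x. (\<forall>i. d\<Omega> i q \<bullet> x = 0) \<longrightarrow> (\<exists>r. x = r *\<^sub>R n)"
    and \<Omega>n: "\<forall>q\<in>U. \<Omega> q \<bullet> n = \<nu>" "\<nu> \<noteq> 0"
    and \<Omega>cont: "continuous_on U \<Omega>"
    and p: "p \<in> U"
  shows "\<exists>\<mu> \<epsilon>. \<bar>\<mu>\<bar> = m \<and> \<epsilon> > 0 \<and> ball p \<epsilon> \<subseteq> U \<and>
           (\<forall>q\<in>ball p \<epsilon>. \<xi> q = (\<mu>/\<nu>) *\<^sub>R n \<and> h q = (1/\<mu>) *\<^sub>R H0 q) \<and> S p = 0 \<and>
           (\<forall>i j. (\<Sum>k\<in>UNIV. \<Gamma> p i j $ k *\<^sub>R P k p) = P2 i j p - (H0 p $ i $ j / \<nu>) *\<^sub>R n)"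
proof -
  note bsd = bs[unfolded blaschke_structure_def]
  have U: "open U" using bsd by (rule conjunct1)
  have \<xi>diff: "\<xi> differentiable_on U"
    using bsd[THEN conjunct2, THEN conjunct2, THEN conjunct2, THEN conjunct1] .
  have allp: "\<forall>p\<in>U.
        frame_det \<phi> \<xi> p \<noteq> 0 \<and>
        (\<forall>i j. pd (pd \<phi> j) i p = (\<Sum>k\<in>UNIV. (\<Gamma> p i j $ k) *\<^sub>R pd \<phi> k p) + (h p $ i $ j) *\<^sub>R \<xi> p) \<and>
        (\<forall>i. pd \<xi> i p = - (\<Sum>k\<in>UNIV. (S p $ k $ i) *\<^sub>R pd \<phi> k p)) \<and>
        det (h p) \<noteq> 0 \<and>
        (frame_det \<phi> \<xi> p)\<^sup>2 = \<bar>det (h p)\<bar>"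
    by (rule bsd[THEN conjunct2, THEN conjunct2, THEN conjunct2, THEN conjunct2, THEN conjunct2])
  have eqA: "P2 i j q = (\<Sum>k\<in>UNIV. (\<Gamma> q i j $ k) *\<^sub>R P k q) + (h q $ i $ j) *\<^sub>R \<xi> q" if "q \<in> U" for q i j
  proof -
    have "pd (pd \<phi> j) i q = (\<Sum>k\<in>UNIV. (\<Gamma> q i j $ k) *\<^sub>R pd \<phi> k q) + (h q $ i $ j) *\<^sub>R \<xi> q"
      using allp[rule_format, OF that, THEN conjunct2, THEN conjunct1] by (rule spec2)
    then show ?thesis using pdP pdP2 that by simp
  qed
  have eqB: "pd \<xi> i q = - (\<Sum>k\<in>UNIV. (S q $ k $ i) *\<^sub>R P k q)" if "q \<in> U" for q i
  proof -
    have "pd \<xi> i q = - (\<Sum>k\<in>UNIV. (S q $ k $ i) *\<^sub>R pd \<phi> k q)"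
      using allp[rule_format, OF that, THEN conjunct2, THEN conjunct2, THEN conjunct1] by (rule spec)
    then show ?thesis using pdP that by simp
  qed
  have norm: "(frame_det \<phi> \<xi> q)\<^sup>2 = \<bar>det (h q)\<bar>" "det (h q) \<noteq> 0" if "q \<in> U" for q
    using allp[rule_format, OF that, THEN conjunct2, THEN conjunct2, THEN conjunct2] by simp_all
  define \<mu> where "\<mu> q = \<Omega> q \<bullet> \<xi> q" for q
  have hmu: "H0 q $ i $ j = h q $ i $ j * \<mu> q" if "q \<in> U" for q i j
  proof -
    have "H0 q $ i $ j = \<Omega> q \<bullet> P2 i j q" using \<Omega>P2 that by simp
    also have "\<dots> = (\<Sum>k\<in>UNIV. (\<Gamma> q i j $ k) * (\<Omega> q \<bullet> P k q)) + h q $ i $ j * \<mu> q"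
      unfolding eqA[OF that] \<mu>_def by (simp add: inner_add_right inner_sum_right)
    also have "\<dots> = h q $ i $ j * \<mu> q" using \<Omega>P that by simp
    finally show ?thesis .
  qed
  have mu0: "\<mu> q \<noteq> 0" if "q \<in> U" for q using hmu[OF that, of 1 1] H11 that by auto
  have hq: "h q = (1 / \<mu> q) *\<^sub>R H0 q" if "q \<in> U" for q
    using hmu[OF that] mu0[OF that] by (simp add: vec_eq_iff)
  have absmu: "\<bar>\<mu> q\<bar> = m" if "q \<in> U" for q
  proof -
    have m0: "\<mu> q \<noteq> 0" "\<rho> q \<noteq> 0" using mu0 that dH by auto
    have dh: "det (h q) = det (H0 q) / \<mu> q ^ 3"
      unfolding hq[OF that] using m0 by (simp add: det_3 field_simps power3_eq_cube)
    have fdq: "frame_det \<phi> \<xi> q = \<rho> q * \<mu> q"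
      using frame_det_rows4[of \<phi> q P \<xi>] pdP fd that unfolding \<mu>_def by auto
    have "(\<rho> q * \<mu> q)^2 = \<bar>det (H0 q)\<bar> / \<bar>\<mu> q\<bar> ^ 3"
      using norm[OF that] unfolding fdq dh by (simp add: abs_divide power_abs)
    then have "(\<rho> q * \<mu> q)^2 * \<bar>\<mu> q\<bar> ^ 3 = \<rho> q ^ 2 * m ^ 5"
      using dH that m0 by (simp add: field_simps)
    moreover have "(\<rho> q * \<mu> q)^2 * \<bar>\<mu> q\<bar> ^ 3 = \<rho> q ^ 2 * (\<bar>\<mu> q\<bar> ^ 5)"
    proof -
      have "(\<rho> q * \<mu> q)^2 = \<rho> q ^ 2 * \<bar>\<mu> q\<bar> ^ 2" by (simp add: power_mult_distrib)
      moreover have "\<bar>\<mu> q\<bar> ^ 2 * \<bar>\<mu> q\<bar> ^ 3 = \<bar>\<mu> q\<bar> ^ 5"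
        by (metis numeral_plus_numeral power_add semiring_norm(2) semiring_norm(5) semiring_norm(7))
      ultimately show ?thesis by (simp add: mult.assoc)
    qed
    ultimately have "\<rho> q ^ 2 * (\<bar>\<mu> q\<bar> ^ 5) = \<rho> q ^ 2 * m ^ 5" by simp
    then have "\<bar>\<mu> q\<bar> ^ 5 = m ^ 5" using m0 by simp
    then show ?thesis by (rule power_eq_imp_eq_base) (use dH in auto)
  qed
  have mucont: "continuous_on U \<mu>"
    unfolding \<mu>_def using \<Omega>cont differentiable_imp_continuous_on[OF \<xi>diff]
    by (intro continuous_intros)
  have lc: "\<exists>\<epsilon>>0. ball q \<epsilon> \<subseteq> U \<and> (\<forall>y\<in>ball q \<epsilon>. \<mu> y = \<mu> q)" if "q \<in> U" for q
    by (rule loc_const[OF mucont U _ dH(3) that]) (use absmu in auto)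
  have xi_n: "\<xi> q = (\<mu> q / \<nu>) *\<^sub>R n" if q: "q \<in> U" for q
  proof -
    obtain \<epsilon> where \<epsilon>: "\<epsilon> > 0" "ball q \<epsilon> \<subseteq> U" "\<forall>y\<in>ball q \<epsilon>. \<mu> y = \<mu> q" using lc[OF q] by blast
    have "d\<Omega> i q \<bullet> \<xi> q = 0" for i
    proof -
      have xd: "\<xi> differentiable (at q)"
        using \<xi>diff U q differentiable_on_eq_differentiable_at by blast
      have h1: "((\<lambda>s. \<Omega> (q + s *\<^sub>R axis i 1) \<bullet> \<xi> (q + s *\<^sub>R axis i 1)) has_vector_derivative
               (\<Omega> q \<bullet> pd \<xi> i q + d\<Omega> i q \<bullet> \<xi> q)) (at 0)"
        using bounded_bilinear.has_vector_derivative[OF bounded_bilinear_inner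
                 d\<Omega>[rule_format, OF q, of i] pd_works[OF xd, of i]]
        by simp
      let ?W = "{s::real. q + s *\<^sub>R axis i 1 \<in> ball q \<epsilon>}"
      have W: "open ?W" "0 \<in> ?W" using line_open[of "ball q \<epsilon>" q "axis i 1"] \<epsilon> by auto
      have h2: "((\<lambda>s. \<Omega> (q + s *\<^sub>R axis i 1) \<bullet> \<xi> (q + s *\<^sub>R axis i 1)) has_vector_derivative 0) (at 0)"
      proof (rule has_vector_derivative_transform_within_open[OF has_vector_derivative_const[of "\<mu> q"] W])
        fix s assume "s \<in> ?W"
        then have "\<mu> (q + s *\<^sub>R axis i 1) = \<mu> q" using \<epsilon>(3) by blast
        then show "\<mu> q = \<Omega> (q + s *\<^sub>R axis i 1) \<bullet> \<xi> (q + s *\<^sub>R axis i 1)" unfolding \<mu>_def by simp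
      qed
      have "\<Omega> q \<bullet> pd \<xi> i q + d\<Omega> i q \<bullet> \<xi> q = 0" using vector_derivative_unique_at[OF h1 h2] .
      moreover have "\<Omega> q \<bullet> pd \<xi> i q = 0"
        unfolding eqB[OF q] using \<Omega>P q by (simp add: inner_sum_right)
      ultimately show ?thesis by simp
    qed
    then obtain r where r: "\<xi> q = r *\<^sub>R n" using span q by blast
    have "\<mu> q = r * \<nu>" unfolding \<mu>_def r using \<Omega>n q by simp
    then show ?thesis using r \<Omega>n(2) by simp
  qed
  obtain \<epsilon> where \<epsilon>: "\<epsilon> > 0" "ball p \<epsilon> \<subseteq> U" "\<forall>y\<in>ball p \<epsilon>. \<mu> y = \<mu> p" using lc[OF p] by blast
  have near: "\<xi> q = (\<mu> p/\<nu>) *\<^sub>R n \<and> h q = (1/\<mu> p) *\<^sub>R H0 q" if "q \<in> ball p \<epsilon>" for q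
  proof -
    have q: "q \<in> U" using \<epsilon>(2) that by blast
    have "\<mu> q = \<mu> p" using \<epsilon>(3) that by blast
    then show ?thesis using xi_n[OF q] hq[OF q] by simp
  qed
  have Sp: "S p = 0"
  proof -
    have "pd \<xi> i p = 0" for i
    proof (rule pd_const_near[of "ball p \<epsilon>"])
      show "open (ball p \<epsilon>)" by simp
      show "p \<in> ball p \<epsilon>" using \<epsilon>(1) by simp
      show "\<xi> q = (\<mu> p/\<nu>) *\<^sub>R n" if "q \<in> ball p \<epsilon>" for q using near[OF that] by blast
    qed
    then have "(\<Sum>k\<in>UNIV. (\<chi> k. S p $ k $ i) $ k *\<^sub>R P k p) = 0" for i
      using eqB[OF p, of i] by simp
    then have "(\<chi> k. S p $ k $ i) = 0" for i using indep p by blast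
    then have "\<forall>k. S p $ k $ i = 0" for i by (simp add: vec_eq_iff)
    then show ?thesis by (simp add: vec_eq_iff)
  qed
  have Gp: "(\<Sum>k\<in>UNIV. \<Gamma> p i j $ k *\<^sub>R P k p) = P2 i j p - (H0 p $ i $ j / \<nu>) *\<^sub>R n" for i j
  proof -
    have "h p $ i $ j *\<^sub>R \<xi> p = (H0 p $ i $ j / \<nu>) *\<^sub>R n"
    proof -
      have "p \<in> ball p \<epsilon>" using \<epsilon>(1) by simp
      then have "\<xi> p = (\<mu> p/\<nu>) *\<^sub>R n \<and> h p = (1/\<mu> p) *\<^sub>R H0 p" by (rule near)
      then show ?thesis using mu0[OF p] by simp
    qed
    then show ?thesis using eqA[OF p, of i j] by (simp add: algebra_simps)
  qed
  show ?thesis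
    using absmu[OF p] \<epsilon>(1,2) near Sp Gp by blast
qed




lemma matrix_inv_eq:
  fixes A B :: "real^3^3"
  assumes "A ** B = mat 1" "B ** A = mat 1"
  shows "matrix_inv A = B"
proof -
  have ex: "\<exists>C. A ** C = mat 1 \<and> C ** A = mat 1" using assms by blast
  define C where "C = matrix_inv A"
  have C: "A ** C = mat 1 \<and> C ** A = mat 1"
    unfolding C_def matrix_inv_def by (rule someI_ex[OF ex])
  have "C = C ** (A ** B)" using assms by simp
  also have "\<dots> = (C ** A) ** B" by (simp add: matrix_mul_assoc)
  also have "\<dots> = B" using C by simp
  finally show ?thesis unfolding C_def .
qed

lemma blk_inv:
  assumes "A \<noteq> 0" "B \<noteq> 0" "a*d - b^2 = -1"
  shows "matrix_inv (blk A B a b d) = blk (1/A) (1/B) (-d) b (-a)"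
proof (rule matrix_inv_eq)
  show "blk A B a b d ** blk (1/A) (1/B) (-d) b (-a) = mat 1"
    unfolding mat3_eq forall_3 using assms
    by (simp add: matrix_matrix_mult_def sum_3 blk_nth mat_def algebra_simps power2_eq_square)
  show "blk (1/A) (1/B) (-d) b (-a) ** blk A B a b d = mat 1"
    unfolding mat3_eq forall_3 using assms
    by (simp add: matrix_matrix_mult_def sum_3 blk_nth mat_def algebra_simps power2_eq_square)
qed

lemma pd_coord1:
  fixes F :: "real \<Rightarrow> real"
  assumes "(F has_real_derivative D) (at (p$1))"
  shows "pd (\<lambda>q. F (q$1)) k p = (if k = 1 then D else 0)"
proof (cases "k = 1")
  case True
  have "((\<lambda>s. F ((p + s *\<^sub>R axis 1 1) $ 1)) has_real_derivative D) (at 0)"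
  proof -
    have "((\<lambda>s. F (p$1 + s)) has_real_derivative D * 1) (at 0)"
      by (rule DERIV_chain2[of F]) (use assms in \<open>auto intro!: derivative_eq_intros\<close>)
    then show ?thesis by (simp add: axis_def)
  qed
  then show ?thesis using True
    by (intro pd_hvd) (simp add: has_real_derivative_iff_has_vector_derivative)
next
  case False
  have "((\<lambda>s. F ((p + s *\<^sub>R axis k 1) $ 1)) has_vector_derivative 0) (at 0)"
    using False by (simp add: axis_def)
  then show ?thesis using False by (intro pd_hvd) simp
qed

definition Gf :: "real \<Rightarrow> real \<Rightarrow> real \<Rightarrow> real \<Rightarrow> real \<Rightarrow> real \<Rightarrow> 3 \<Rightarrow> 3 \<Rightarrow> real^3" where
  "Gf g1 g2 g3 a b d i j = (if i = 1 \<and> j = 1 then g1 *\<^sub>R axis 1 1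
     else if i = 1 then g2 *\<^sub>R axis j 1 else if j = 1 then g2 *\<^sub>R axis i 1
     else (g3 * Qf a b d i j) *\<^sub>R axis 1 1)"

lemma aux_bb:
  fixes B' b a d X :: real
  assumes "1 + a*d = b^2"
  shows "B' * (b * (b * X)) = B' * X + B' * (a * (d * X))"
proof -
  have "B' * (b * (b * X)) = B' * X * (b^2)" by (simp add: power2_eq_square algebra_simps)
  also have "\<dots> = B' * X * (1 + a*d)" using assms by simp
  also have "\<dots> = B' * X + B' * (a * (d * X))" by (simp add: algebra_simps)
  finally show ?thesis .
qed

lemma lc_blk:
  fixes h :: "real^3 \<Rightarrow> real^3^3" and A B :: "real \<Rightarrow> real"
  assumes V: "open V" "p \<in> V" and hV: "\<forall>q\<in>V. h q = blk (A (q$1)) (B (q$1)) a b d"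
    and dA: "(A has_real_derivative A') (at (p$1))" and dB: "(B has_real_derivative B') (at (p$1))"
    and nz: "A (p$1) \<noteq> 0" "B (p$1) \<noteq> 0" and Q: "a*d - b^2 = -1"
  shows "lc_christoffel h p i j = Gf (A'/(2*A (p$1))) (B'/(2*B (p$1))) (-B'/(2*A (p$1))) a b d i j"
proof -
  have pdh: "pd (\<lambda>q. h q $ x $ y) z p = (if z = 1 then blk A' B' a b d $ x $ y else 0)" for x y z
  proof -
    have "pd (\<lambda>q. h q $ x $ y) z p = pd (\<lambda>q. (\<lambda>t. blk (A t) (B t) a b d $ x $ y) (q$1)) z p"
      by (rule pd_local[OF V]) (simp add: hV)
    also have "\<dots> = (if z = 1 then blk A' B' a b d $ x $ y else 0)"
    proof (rule trans[OF pd_coord1])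
      show "((\<lambda>t. blk (A t) (B t) a b d $ x $ y) has_real_derivative blk A' B' a b d $ x $ y) (at (p$1))"
        unfolding blk_def using dA dB
        by (cases "x = 1 \<and> y = 1"; cases "x = 1 \<or> y = 1") (auto intro!: derivative_eq_intros)
    qed simp
    finally show ?thesis .
  qed
  have hp: "h p = blk (A (p$1)) (B (p$1)) a b d" using hV V by blast
  have inv: "matrix_inv (h p) = blk (1/A (p$1)) (1/B (p$1)) (-d) b (-a)"
    unfolding hp by (rule blk_inv[OF nz Q])
  show ?thesis
    unfolding lc_christoffel_def inv pdh
    using exhaust_3[of i] exhaust_3[of j] nz Q
    apply (auto simp: vec_eq_iff forall_3 sum_3 blk_nth Gf_def Qf_def axis_def field_simps)
    apply (simp_all add: aux_bb)
    done
qed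


lemma dt_Gf:
  assumes G: "\<forall>i j. \<Gamma> p i j = Gf gA gB gC a b d i j"
    and L: "\<forall>i j. lc_christoffel h p i j = Gf lA lB lC a b d i j"
    and r: "gB - lB = -(gA - lA)/2"
  shows "diff_tensor h \<Gamma> p = Kf (gA - lA) (gC - lC) a b d"
proof (intro ext)
  fix X Y :: "real^3"
  have r': "gB = lB - (gA - lA)/2" using r by linarith
  show "diff_tensor h \<Gamma> p X Y = Kf (gA - lA) (gC - lC) a b d X Y"
    unfolding diff_tensor_def vec_eq_iff forall_3
    by (simp add: G[rule_format] L[rule_format] sum_3 Gf_def Qf_def axis_def Kf_def qf_def r' field_simps)
qed

lemma blk_scale: "c *\<^sub>R blk A B a b d = blk (c*A) (c*B) a b d"
  by (simp add: blk_def vec_eq_iff)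

lemma final_sym:
  fixes h :: "real^3 \<Rightarrow> real^3^3" and A B :: "real \<Rightarrow> real"
  assumes V: "open V" "p \<in> V" and hV: "\<forall>q\<in>V. h q = blk (A (q$1)) (B (q$1)) a b d"
    and dA: "(A has_real_derivative A') (at (p$1))" and dB: "(B has_real_derivative B') (at (p$1))"
    and nz: "A (p$1) \<noteq> 0" "B (p$1) \<noteq> 0" and Q: "a*d - b^2 = -1"
    and G: "\<forall>i j. \<Gamma> p i j = Gf g1 g2 g3 a b d i j"
    and r: "g2 - B'/(2*B (p$1)) = -(g1 - A'/(2*A (p$1)))/2"
    and al: "g1 - A'/(2*A (p$1)) \<noteq> 0"
  shows "matrix_group_iso (sym_group (h p) (diff_tensor h \<Gamma> p)) SO11"
proof -
  have L: "\<forall>i j. lc_christoffel h p i j = Gf (A'/(2*A (p$1))) (B'/(2*B (p$1))) (-B'/(2*A (p$1))) a b d i j"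
    using lc_blk[OF V hV dA dB nz Q] by blast
  have "diff_tensor h \<Gamma> p = Kf (g1 - A'/(2*A (p$1))) (g3 - (-B'/(2*A (p$1)))) a b d"
    by (rule dt_Gf[where lA="A'/(2*A (p$1))" and lB="B'/(2*B (p$1))" and lC="-B'/(2*A (p$1))"
          and gA=g1 and gB=g2 and gC=g3 and \<Gamma>=\<Gamma> and p=p and h=h, OF G L r])
  moreover have "h p = blk (A (p$1)) (B (p$1)) a b d" using hV V by blast
  ultimately show ?thesis using G2[OF Q nz al] by simp
qed

lemma existence:
  fixes U :: "(real^3) set" and \<phi> :: "real^3 \<Rightarrow> real^4"
    and P :: "3 \<Rightarrow> real^3 \<Rightarrow> real^4" and P2 :: "3 \<Rightarrow> 3 \<Rightarrow> real^3 \<Rightarrow> real^4"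
    and \<Omega> :: "real^3 \<Rightarrow> real^4" and \<Gamma>0 :: "real^3 \<Rightarrow> 3 \<Rightarrow> 3 \<Rightarrow> real^3"
    and H0 :: "real^3 \<Rightarrow> real^3^3" and \<rho> :: "real^3 \<Rightarrow> real" and m \<nu> :: real and n :: "real^4"
  assumes U: "open U" and \<phi>d: "\<phi> differentiable_on U"
    and pdP: "\<forall>q\<in>U. \<forall>k. pd \<phi> k q = P k q"
    and Pd: "\<forall>k. P k differentiable_on U"
    and pdP2: "\<forall>q\<in>U. \<forall>i j. pd (pd \<phi> j) i q = P2 i j q"
    and fd: "\<forall>q\<in>U. \<forall>x. det (rows4 (P 1 q) (P 2 q) (P 3 q) x) = \<rho> q * (\<Omega> q \<bullet> x)"
    and dH: "\<forall>q\<in>U. \<rho> q ^ 2 * m ^ 5 = \<bar>det (H0 q)\<bar>" "\<forall>q\<in>U. \<rho> q \<noteq> 0" "m > 0"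
    and \<Omega>n: "\<forall>q\<in>U. \<Omega> q \<bullet> n = \<nu>" "\<nu> \<noteq> 0"
    and Hd: "\<forall>i j. (\<lambda>q. H0 q $ i $ j) differentiable_on U"
    and Geq: "\<forall>q\<in>U. \<forall>i j. P2 i j q = (\<Sum>k\<in>UNIV. \<Gamma>0 q i j $ k *\<^sub>R P k q) + (H0 q $ i $ j / \<nu>) *\<^sub>R n"
  shows "blaschke_structure U \<phi> (\<lambda>q. (m/\<nu>) *\<^sub>R n) (\<lambda>q. (1/m) *\<^sub>R H0 q) \<Gamma>0 (\<lambda>q. 0)"
  unfolding blaschke_structure_def
proof (intro conjI ballI allI)
  show "open U" by fact
  show "\<phi> differentiable_on U" by fact
  show "pd \<phi> i differentiable_on U" for i
    by (rule differentiable_on_transform_open[OF Pd[rule_format, of i] U]) (use pdP in simp)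
  show "(\<lambda>q. (m/\<nu>) *\<^sub>R n) differentiable_on U" by simp
  show "(\<lambda>q. ((1/m) *\<^sub>R H0 q) $ i $ j) differentiable_on U" for i j
  proof -
    have "(\<lambda>q. (1/m) * H0 q $ i $ j) differentiable_on U"
      using Hd by (intro differentiable_on_mult differentiable_on_const) auto
    then show ?thesis by simp
  qed
  fix q assume q: "q \<in> U"
  have fdq: "frame_det \<phi> (\<lambda>q. (m/\<nu>) *\<^sub>R n) q = \<rho> q * m"
    using frame_det_rows4[of \<phi> q P "\<lambda>q. (m/\<nu>) *\<^sub>R n"] pdP fd q \<Omega>n by auto
  show "frame_det \<phi> (\<lambda>q. (m/\<nu>) *\<^sub>R n) q \<noteq> 0" using fdq dH q by simp
  show "pd (pd \<phi> j) i q = (\<Sum>k\<in>UNIV. \<Gamma>0 q i j $ k *\<^sub>R pd \<phi> k q) + ((1/m) *\<^sub>R H0 q) $ i $ j *\<^sub>R (m/\<nu>) *\<^sub>R n" for i j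
    using pdP pdP2 Geq q dH(3) by simp
  show "pd (\<lambda>q. (m/\<nu>) *\<^sub>R n) i q = - (\<Sum>k\<in>UNIV. (0::real^3^3) $ k $ i *\<^sub>R pd \<phi> k q)" for i
    by (simp add: pd_hvd)
  have dh: "det ((1/m) *\<^sub>R H0 q) = det (H0 q) / m^3"
    using dH(3) by (simp add: det_3 field_simps power3_eq_cube)
  have dne: "det (H0 q) \<noteq> 0" using dH q by auto
  show "det ((1/m) *\<^sub>R H0 q) \<noteq> 0" using dh dne dH(3) by simp
  show "(frame_det \<phi> (\<lambda>q. (m/\<nu>) *\<^sub>R n) q)\<^sup>2 = \<bar>det ((1/m) *\<^sub>R H0 q)\<bar>"
  proof -
    have "\<bar>det ((1/m) *\<^sub>R H0 q)\<bar> = \<rho> q ^ 2 * m ^ 5 / m ^ 3"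
      using dh dH q by (simp add: abs_divide)
    also have "\<dots> = (\<rho> q * m)^2" using dH(3) by (simp add: eval_nat_numeral field_simps)
    finally show ?thesis using fdq by simp
  qed
qed




lemma q_pos_neg:
  fixes a b d :: real
  assumes Q: "a*d - b^2 = -1"
  shows "\<exists>x y. a*x*x + 2*b*x*y + d*y*y > 0" "\<exists>x y. a*x*x + 2*b*x*y + d*y*y < 0"
proof -
  have "(\<exists>x y. a*x*x + 2*b*x*y + d*y*y > 0) \<and> (\<exists>x y. a*x*x + 2*b*x*y + d*y*y < 0)"
  proof (cases "a = 0")
    case False
    have v1: "a*1*1 + 2*b*1*0 + d*0*0 = a" by simp
    have v2: "a*(-b)*(-b) + 2*b*(-b)*a + d*a*a = -a" using Q by (simp add: algebra_simps power2_eq_square) algebra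
    show ?thesis
    proof (cases "a > 0")
      case True then show ?thesis using v1 v2 by (metis neg_less_0_iff_less)
    next
      case False then have "a < 0" using \<open>a \<noteq> 0\<close> by simp
      then show ?thesis using v1 v2 by (metis neg_0_less_iff_less)
    qed
  next
    case True
    then have bb: "b*b = 1" using Q by (simp add: power2_eq_square)
    have "a*(b*(1-d))*(b*(1-d)) + 2*b*(b*(1-d))*2 + d*2*2 = 4"
      using True bb by algebra
    moreover have "a*(b*(-1-d))*(b*(-1-d)) + 2*b*(b*(-1-d))*2 + d*2*2 = -4"
      using True bb by algebra
    ultimately show ?thesis by (metis zero_less_numeral neg_less_0_iff_less)
  qed
  then show "\<exists>x y. a*x*x + 2*b*x*y + d*y*y > 0" "\<exists>x y. a*x*x + 2*b*x*y + d*y*y < 0" by blast+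
qed

lemma indef_blk:
  assumes Q: "a*d - b^2 = -1" and B: "B \<noteq> 0"
  shows "indefinite_form (blk A B a b d)"
proof -
  have val: "(vector [0, x, y] :: real^3) \<bullet> (blk A B a b d *v vector [0, x, y]) = B * (a*x*x + 2*b*x*y + d*y*y)" for x y
    by (simp add: inner_vec_def matrix_vector_mult_def sum_3 blk_nth algebra_simps)
  obtain x1 y1 where p: "a*x1*x1 + 2*b*x1*y1 + d*y1*y1 > 0" using q_pos_neg[OF Q] by blast
  obtain x2 y2 where n: "a*x2*x2 + 2*b*x2*y2 + d*y2*y2 < 0" using q_pos_neg[OF Q] by blast
  show ?thesis
  proof (cases "B > 0")
    case True
    then show ?thesis unfolding indefinite_form_def using p n val
      by (metis mult_pos_pos mult_pos_neg)
  next
    case False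
    then have "B < 0" using B by simp
    then show ?thesis unfolding indefinite_form_def using p n val
      by (metis mult_neg_neg mult_neg_pos)
  qed
qed

lemma Gamma_from:
  assumes indep: "\<forall>c::real^3. (\<Sum>k\<in>UNIV. c$k *\<^sub>R P k) = (0::real^4) \<longrightarrow> c = 0"
    and e1: "(\<Sum>k\<in>UNIV. X $ k *\<^sub>R P k) = R" and e2: "(\<Sum>k\<in>UNIV. Y $ k *\<^sub>R P k) = R"
  shows "X = Y"
proof -
  have "(\<Sum>k\<in>UNIV. (X - Y) $ k *\<^sub>R P k) = 0"
    using e1 e2 by (simp add: scaleR_diff_left sum_subtractf)
  then have "X - Y = 0" using indep by blast
  then show ?thesis by simp
qed


lemma main_generic:
  fixes U :: "(real^3) set" and \<phi> :: "real^3 \<Rightarrow> real^4"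
    and P :: "3 \<Rightarrow> real^3 \<Rightarrow> real^4" and Psec :: "3 \<Rightarrow> 3 \<Rightarrow> real^3 \<Rightarrow> real^4"
    and \<Omega> :: "real^3 \<Rightarrow> real^4" and d\<Omega> :: "3 \<Rightarrow> real^3 \<Rightarrow> real^4"
    and Af Bf Af' Bf' gA gB gC :: "real \<Rightarrow> real" and \<rho> :: "real^3 \<Rightarrow> real" and m \<nu> :: real and n :: "real^4"
  assumes U: "open U" and \<phi>d: "\<phi> differentiable_on U"
    and pdP: "\<forall>q\<in>U. \<forall>k. pd \<phi> k q = P k q"
    and Pd: "\<forall>k. P k differentiable_on U"
    and pdP2: "\<forall>q\<in>U. \<forall>i j. pd (pd \<phi> j) i q = Psec i j q"
    and indep: "\<forall>q\<in>U. \<forall>c::real^3. (\<Sum>k\<in>UNIV. c$k *\<^sub>R P k q) = 0 \<longrightarrow> c = 0"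
    and \<Omega>P: "\<forall>q\<in>U. \<forall>k. \<Omega> q \<bullet> P k q = 0"
    and \<Omega>Psec: "\<forall>q\<in>U. \<forall>i j. \<Omega> q \<bullet> Psec i j q = blk (Af (q$1)) (Bf (q$1)) a b d $ i $ j"
    and ABnz: "\<forall>q\<in>U. Af (q$1) \<noteq> 0 \<and> Bf (q$1) \<noteq> 0"
    and fd: "\<forall>q\<in>U. \<forall>x. det (rows4 (P 1 q) (P 2 q) (P 3 q) x) = \<rho> q * (\<Omega> q \<bullet> x)"
    and dH: "\<forall>q\<in>U. \<rho> q ^ 2 * m ^ 5 = \<bar>det (blk (Af (q$1)) (Bf (q$1)) a b d)\<bar>" "\<forall>q\<in>U. \<rho> q \<noteq> 0" "m > 0"
    and d\<Omega>: "\<forall>q\<in>U. \<forall>i. ((\<lambda>s. \<Omega> (q + s *\<^sub>R axis i 1)) has_vector_derivative d\<Omega> i q) (at 0)"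
    and span: "\<forall>q\<in>U. \<forall>x. (\<forall>i. d\<Omega> i q \<bullet> x = 0) \<longrightarrow> (\<exists>r. x = r *\<^sub>R n)"
    and \<Omega>n: "\<forall>q\<in>U. \<Omega> q \<bullet> n = \<nu>" "\<nu> \<noteq> 0"
    and \<Omega>cont: "continuous_on U \<Omega>"
    and Hd: "\<forall>i j. (\<lambda>q. blk (Af (q$1)) (Bf (q$1)) a b d $ i $ j) differentiable_on U"
    and Geq: "\<forall>q\<in>U. \<forall>i j. Psec i j q = (\<Sum>k\<in>UNIV. Gf (gA (q$1)) (gB (q$1)) (gC (q$1)) a b d i j $ k *\<^sub>R P k q)
                     + (blk (Af (q$1)) (Bf (q$1)) a b d $ i $ j / \<nu>) *\<^sub>R n"
    and dA: "\<forall>q\<in>U. (Af has_real_derivative Af' (q$1)) (at (q$1))"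
    and dB: "\<forall>q\<in>U. (Bf has_real_derivative Bf' (q$1)) (at (q$1))"
    and rel: "\<forall>q\<in>U. gB (q$1) - Bf' (q$1)/(2*Bf (q$1)) = -(gA (q$1) - Af' (q$1)/(2*Af (q$1)))/2"
    and al: "\<forall>q\<in>U. gA (q$1) - Af' (q$1)/(2*Af (q$1)) \<noteq> 0"
    and Q: "a*d - b^2 = -1"
  shows "improper_affine_hypersphere U \<phi> \<and> indefinite_hypersurface U \<phi> \<and> pointwise_symmetry U \<phi> SO11"
proof -
  define H0 :: "real^3 \<Rightarrow> real^3^3" where "H0 q = blk (Af (q$1)) (Bf (q$1)) a b d" for q
  define \<Gamma>0 :: "real^3 \<Rightarrow> 3 \<Rightarrow> 3 \<Rightarrow> real^3" where "\<Gamma>0 q = Gf (gA (q$1)) (gB (q$1)) (gC (q$1)) a b d" for q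
  have ex: "blaschke_structure U \<phi> (\<lambda>q. (m/\<nu>) *\<^sub>R n) (\<lambda>q. (1/m) *\<^sub>R H0 q) \<Gamma>0 (\<lambda>q. 0)"
    by (rule existence[OF U \<phi>d pdP Pd pdP2 fd _ dH(2,3) \<Omega>n])
       (use dH(1) Hd Geq in \<open>simp_all add: H0_def \<Gamma>0_def\<close>)
  have H11: "\<forall>q\<in>U. H0 q $ 1 $ 1 \<noteq> 0" using ABnz by (simp add: H0_def blk_nth)
  have an: "\<exists>\<mu> \<epsilon>. \<bar>\<mu>\<bar> = m \<and> \<epsilon> > 0 \<and> ball p \<epsilon> \<subseteq> U \<and>
           (\<forall>q\<in>ball p \<epsilon>. \<xi> q = (\<mu>/\<nu>) *\<^sub>R n \<and> h q = (1/\<mu>) *\<^sub>R H0 q) \<and> S p = 0 \<and>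
           (\<forall>i j. (\<Sum>k\<in>UNIV. \<Gamma> p i j $ k *\<^sub>R P k p) = Psec i j p - (H0 p $ i $ j / \<nu>) *\<^sub>R n)"
    if bs: "blaschke_structure U \<phi> \<xi> h \<Gamma> S" and p: "p \<in> U" for \<xi> h \<Gamma> S p
    by (rule analysis[OF bs pdP pdP2 indep \<Omega>P _ H11 fd _ dH(2,3) d\<Omega> span \<Omega>n \<Omega>cont p])
       (use \<Omega>Psec dH(1) in \<open>simp_all add: H0_def\<close>)
  have main: "S p = 0 \<and> indefinite_form (h p) \<and> matrix_group_iso (sym_group (h p) (diff_tensor h \<Gamma> p)) SO11"
    if bs: "blaschke_structure U \<phi> \<xi> h \<Gamma> S" and p: "p \<in> U" for \<xi> h \<Gamma> S p
  proof -
    obtain \<mu> \<epsilon> where mu: "\<bar>\<mu>\<bar> = m" "\<epsilon> > 0" "ball p \<epsilon> \<subseteq> U"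
      and near: "\<forall>q\<in>ball p \<epsilon>. \<xi> q = (\<mu>/\<nu>) *\<^sub>R n \<and> h q = (1/\<mu>) *\<^sub>R H0 q"
      and Sp: "S p = 0"
      and Gp: "\<forall>i j. (\<Sum>k\<in>UNIV. \<Gamma> p i j $ k *\<^sub>R P k p) = Psec i j p - (H0 p $ i $ j / \<nu>) *\<^sub>R n"
      using an[OF bs p] by blast
    have mu0: "\<mu> \<noteq> 0" using mu(1) dH(3) by auto
    define A where "A t = (1/\<mu>) * Af t" for t
    define B where "B t = (1/\<mu>) * Bf t" for t
    have hV: "\<forall>q\<in>ball p \<epsilon>. h q = blk (A (q$1)) (B (q$1)) a b d"
      using near by (simp add: H0_def blk_scale A_def B_def)
    have pb: "p \<in> ball p \<epsilon>" using mu(2) by simp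
    have hp: "h p = blk (A (p$1)) (B (p$1)) a b d" using hV pb by blast
    have nzp: "A (p$1) \<noteq> 0" "B (p$1) \<noteq> 0" using ABnz p mu0 by (auto simp: A_def B_def)
    have dAp: "(A has_real_derivative (1/\<mu>) * Af' (p$1)) (at (p$1))"
      unfolding A_def by (rule DERIV_cmult) (use dA p in blast)
    have dBp: "(B has_real_derivative (1/\<mu>) * Bf' (p$1)) (at (p$1))"
      unfolding B_def by (rule DERIV_cmult) (use dB p in blast)
    have G: "\<forall>i j. \<Gamma> p i j = Gf (gA (p$1)) (gB (p$1)) (gC (p$1)) a b d i j"
    proof (intro allI)
      fix i j
      show "\<Gamma> p i j = Gf (gA (p$1)) (gB (p$1)) (gC (p$1)) a b d i j"
      proof (rule Gamma_from)
        show "\<forall>c::real^3. (\<Sum>k\<in>UNIV. c$k *\<^sub>R P k p) = 0 \<longrightarrow> c = 0" using indep p by blast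
        show "(\<Sum>k\<in>UNIV. \<Gamma> p i j $ k *\<^sub>R P k p) = Psec i j p - (H0 p $ i $ j / \<nu>) *\<^sub>R n" using Gp by blast
        show "(\<Sum>k\<in>UNIV. Gf (gA (p$1)) (gB (p$1)) (gC (p$1)) a b d i j $ k *\<^sub>R P k p) = Psec i j p - (H0 p $ i $ j / \<nu>) *\<^sub>R n"
          using Geq p by (simp add: H0_def)
      qed
    qed
    have e1: "(1/\<mu>) * Bf' (p$1)/(2*B (p$1)) = Bf' (p$1)/(2*Bf (p$1))"
      using mu0 by (simp add: B_def)
    have e2: "(1/\<mu>) * Af' (p$1)/(2*A (p$1)) = Af' (p$1)/(2*Af (p$1))"
      using mu0 by (simp add: A_def)
    have r: "gB (p$1) - (1/\<mu>) * Bf' (p$1)/(2*B (p$1)) = -(gA (p$1) - (1/\<mu>) * Af' (p$1)/(2*A (p$1)))/2"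
      unfolding e1 e2 using rel p by blast
    have alp: "gA (p$1) - (1/\<mu>) * Af' (p$1)/(2*A (p$1)) \<noteq> 0"
      unfolding e2 using al p by blast
    have sym: "matrix_group_iso (sym_group (h p) (diff_tensor h \<Gamma> p)) SO11"
      by (rule final_sym[where V="ball p \<epsilon>" and p=p and h=h and A=A and B=B and \<Gamma>=\<Gamma>, OF _ pb hV dAp dBp nzp Q G r alp]) simp
    have ind: "indefinite_form (h p)" unfolding hp by (rule indef_blk[OF Q nzp(2)])
    show ?thesis using Sp ind sym by blast
  qed
  have "has_blaschke_normal U \<phi>" unfolding has_blaschke_normal_def using ex by blast
  then show ?thesis
    unfolding improper_affine_hypersphere_def indefinite_hypersurface_def pointwise_symmetry_def
    using main by blast
qed




lemma pd_vec4:
  assumes "((\<lambda>s. f1 (p + s *\<^sub>R axis i 1)) has_real_derivative D1) (at 0)"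
    "((\<lambda>s. f2 (p + s *\<^sub>R axis i 1)) has_real_derivative D2) (at 0)"
    "((\<lambda>s. f3 (p + s *\<^sub>R axis i 1)) has_real_derivative D3) (at 0)"
    "((\<lambda>s. f4 (p + s *\<^sub>R axis i 1)) has_real_derivative D4) (at 0)"
  shows "pd (\<lambda>q. vector [f1 q, f2 q, f3 q, f4 q] :: real^4) i p = vector [D1, D2, D3, D4]"
  by (rule pd_hvd) (rule hvd4[OF assms])

lemma ax3: "(2::3) \<noteq> 1" "(3::3) \<noteq> 1" "(3::3) \<noteq> 2" "(1::3) \<noteq> 2" "(1::3) \<noteq> 3" "(2::3) \<noteq> 3"
  by simp_all

lemma coord_line: "(p + s *\<^sub>R axis i 1) $ m = p $ m + (if m = i then s else 0)"
  for p :: "real^3" by (simp add: axis_def)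

definition FF :: "real\<Rightarrow>real\<Rightarrow>real\<Rightarrow>real\<Rightarrow>real\<Rightarrow>real\<Rightarrow>real\<Rightarrow>real\<Rightarrow>real" where
  "FF a b d e g k v w = (a * v\<^sup>2 + 2 * b * v * w + d * w\<^sup>2) / 2 + e * v + g * w + k"

definition Phi2 :: "real \<Rightarrow> real\<Rightarrow>real\<Rightarrow>real\<Rightarrow>real\<Rightarrow>real\<Rightarrow>real \<Rightarrow> real^3 \<Rightarrow> real^4" where
  "Phi2 c a b d e g k q = vector [q$2, q$3, FF a b d e g k (q$2) (q$3) + c * (q$1)^3, (q$1)^4]"

lemma cont_vector4:
  assumes "continuous_on S f1" "continuous_on S f2" "continuous_on S f3" "continuous_on S f4"
  shows "continuous_on S (\<lambda>x. vector [f1 x, f2 x, f3 x, f4 x] :: real^4)"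
proof -
  have e: "vector [x1, x2, x3, x4] = x1 *\<^sub>R axis 1 1 + x2 *\<^sub>R axis 2 1 + x3 *\<^sub>R axis 3 1 + (x4 *\<^sub>R axis 4 (1::real) :: real^4)" for x1 x2 x3 x4
    by (simp add: vec_eq_iff forall_4 axis_def)
  show ?thesis unfolding e by (intro continuous_intros assms)
qed

lemma dif_if: "f differentiable_on S \<Longrightarrow> g differentiable_on S \<Longrightarrow> (\<lambda>x. if P then f x else g x) differentiable_on S"
  by (cases P) auto

lemma blk_entry: "blk X Y a b d $ i $ j = (if i = 1 \<and> j = 1 then X else if i = 1 \<or> j = 1 then 0 else Y * Qf a b d i j)"
  by (simp add: blk_def)

lemma rows4_nth:
  "rows4 a b c x $ 1 = a" "rows4 a b c x $ 2 = b" "rows4 a b c x $ 3 = c" "rows4 a b c x $ 4 = x"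
  by (simp_all add: rows4_def)

lemma open_U: "open N \<Longrightarrow> open {p::real^3. p$1 > 0 \<and> (p$2, p$3) \<in> N}"
proof -
  assume N: "open N"
  have "{p::real^3. p$1 > 0 \<and> (p$2, p$3) \<in> N} = {p. 0 < p$1} \<inter> (\<lambda>p. (p$2, p$3)) -` N" by auto
  moreover have "open {p::real^3. 0 < p$1}"
    by (rule open_Collect_less) (intro continuous_intros)+
  moreover have "open ((\<lambda>p::real^3. (p$2, p$3)) -` N)"
    by (rule continuous_open_vimage[OF N]) (intro continuous_intros)
  ultimately show ?thesis by (simp add: open_Int)
qed

definition PB :: "real \<Rightarrow> real\<Rightarrow>real\<Rightarrow>real\<Rightarrow>real\<Rightarrow>real \<Rightarrow> 3 \<Rightarrow> real^3 \<Rightarrow> real^4" where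
  "PB c a b d e g j q = (if j = 1 then vector [0, 0, 3*c*(q$1)^2, 4*(q$1)^3]
     else if j = 2 then vector [1, 0, a*q$2 + b*q$3 + e, 0] else vector [0, 1, b*q$2 + d*q$3 + g, 0])"

definition PB2 :: "real \<Rightarrow> real\<Rightarrow>real\<Rightarrow>real \<Rightarrow> 3 \<Rightarrow> 3 \<Rightarrow> real^3 \<Rightarrow> real^4" where
  "PB2 c a b d i j q = (if i = 1 \<and> j = 1 then vector [0, 0, 6*c*(q$1), 12*(q$1)^2]
     else if i = 1 \<or> j = 1 then vector [0, 0, 0, 0] else vector [0, 0, Qf a b d i j, 0])"

definition OmB :: "real \<Rightarrow> real\<Rightarrow>real\<Rightarrow>real\<Rightarrow>real\<Rightarrow>real \<Rightarrow> real^3 \<Rightarrow> real^4" where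
  "OmB c a b d e g q = vector [-4*(q$1)*(a*q$2 + b*q$3 + e), -4*(q$1)*(b*q$2 + d*q$3 + g), 4*(q$1), -3*c]"

definition dOmB :: "real\<Rightarrow>real\<Rightarrow>real\<Rightarrow>real\<Rightarrow>real \<Rightarrow> 3 \<Rightarrow> real^3 \<Rightarrow> real^4" where
  "dOmB a b d e g i q = (if i = 1 then vector [-4*(a*q$2 + b*q$3 + e), -4*(b*q$2 + d*q$3 + g), 4, 0]
     else if i = 2 then vector [-4*(q$1)*a, -4*(q$1)*b, 0, 0] else vector [-4*(q$1)*b, -4*(q$1)*d, 0, 0])"

lemma pd_Phi2: "pd (Phi2 c a b d e g k) j q = PB c a b d e g j q"
  using exhaust_3[of j]
  unfolding Phi2_def FF_def PB_def
  apply (elim disjE)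
  apply (simp_all add: ax3)
  apply (auto intro!: pd_vec4 derivative_eq_intros simp: coord_line axis_def algebra_simps)
  done

lemma pd_PB: "pd (PB c a b d e g j) i q = PB2 c a b d i j q"
  using exhaust_3[of j] exhaust_3[of i]
  unfolding PB_def PB2_def Qf_def
  apply (elim disjE)
  apply (simp_all add: ax3)
  apply (auto intro!: pd_vec4 derivative_eq_intros simp: coord_line axis_def algebra_simps)
  done

lemma dOmB: "((\<lambda>s. OmB c a b d e g (q + s *\<^sub>R axis i 1)) has_vector_derivative dOmB a b d e g i q) (at 0)"
  using exhaust_3[of i]
  unfolding OmB_def dOmB_def
  apply (elim disjE)
  apply (simp_all add: ax3)
  apply (auto intro!: hvd4 derivative_eq_intros simp: coord_line axis_def algebra_simps)
  done


lemma indepB: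
  assumes t: "q$1 \<noteq> 0" and c: "c \<noteq> 0"
  shows "\<forall>x::real^3. (\<Sum>k\<in>UNIV. x$k *\<^sub>R PB c a b d e g k q) = 0 \<longrightarrow> x = 0"
proof (intro allI impI)
  fix x :: "real^3"
  assume "(\<Sum>k\<in>UNIV. x$k *\<^sub>R PB c a b d e g k q) = 0"
  then have e: "(\<Sum>k\<in>UNIV. x$k *\<^sub>R PB c a b d e g k q) $ m = 0" for m by simp
  have "x$2 = 0" using e[of 1] by (simp add: sum_3 PB_def ax3)
  moreover have "x$3 = 0" using e[of 2] by (simp add: sum_3 PB_def ax3)
  moreover have "x$1 = 0" using e[of 4] t by (simp add: sum_3 PB_def ax3)
  ultimately show "x = 0" by (simp add: vec_eq_iff forall_3)
qed

lemma OmB_P: "OmB c a b d e g q \<bullet> PB c a b d e g k q = 0"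
  using exhaust_3[of k]
  by (auto simp: OmB_def PB_def inner_vec_def sum_4 ax3 algebra_simps power2_eq_square power3_eq_cube)

lemma OmB_P2: "OmB c a b d e g q \<bullet> PB2 c a b d i j q = blk (-12*c*(q$1)^2) (4*(q$1)) a b d $ i $ j"
  using exhaust_3[of i] exhaust_3[of j]
  by (auto simp: OmB_def PB2_def blk_entry Qf_def inner_vec_def sum_4 ax3 algebra_simps power2_eq_square)

lemma fdB: "det (rows4 (PB c a b d e g 1 q) (PB c a b d e g 2 q) (PB c a b d e g 3 q) x)
   = (- ((q$1)^2)) * (OmB c a b d e g q \<bullet> x)"
  by (simp add: det_4 rows4_nth PB_def OmB_def inner_vec_def sum_4 ax3 algebra_simps power2_eq_square power3_eq_cube)

lemma detB:
  assumes Q: "a*d - b^2 = -1"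
  shows "\<bar>det (blk (-12*c*t^2) (4*t) a b d)\<bar> = 192 * \<bar>c\<bar> * t^4"
proof -
  have "det (blk (-12*c*t^2) (4*t) a b d) = (-12*c*t^2) * (16*t^2) * (a*d - b^2)"
    by (simp add: det_3 blk_nth algebra_simps power2_eq_square)
  also have "\<dots> = 192 * c * t^4" unfolding Q by (simp add: algebra_simps eval_nat_numeral)
  finally show ?thesis by (simp add: abs_mult)
qed

lemma spanB:
  assumes t: "q$1 \<noteq> 0" and Q: "a*d - b^2 = -1"
  shows "\<forall>x. (\<forall>i. dOmB a b d e g i q \<bullet> x = 0) \<longrightarrow> (\<exists>r. x = r *\<^sub>R axis 4 1)"
proof (intro allI impI)
  fix x :: "real^4"
  assume h: "\<forall>i. dOmB a b d e g i q \<bullet> x = 0"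
  have h2: "-4*(q$1)*(a*x$1 + b*x$2) = 0" using h[rule_format, of 2]
    by (simp add: dOmB_def inner_vec_def sum_4 ax3 algebra_simps)
  have h3: "-4*(q$1)*(b*x$1 + d*x$2) = 0" using h[rule_format, of 3]
    by (simp add: dOmB_def inner_vec_def sum_4 ax3 algebra_simps)
  have a1: "a*x$1 + b*x$2 = 0" using h2 t by simp
  have a2: "b*x$1 + d*x$2 = 0" using h3 t by simp
  have x1: "x$1 = 0" using a1 a2 Q by algebra
  have x2: "x$2 = 0" using a1 a2 Q by algebra
  have "-4*(a*q$2 + b*q$3 + e)*x$1 - 4*(b*q$2 + d*q$3 + g)*x$2 + 4*x$3 = 0"
    using h[rule_format, of 1] by (simp add: dOmB_def inner_vec_def sum_4 algebra_simps)
  then have x3: "x$3 = 0" using x1 x2 by simp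
  have "x = x$4 *\<^sub>R axis 4 1" using x1 x2 x3 by (simp add: vec_eq_iff forall_4 axis_def)
  then show "\<exists>r. x = r *\<^sub>R axis 4 1" by blast
qed

lemma GeqB:
  assumes t: "q$1 \<noteq> 0" and c: "c \<noteq> 0"
  shows "PB2 c a b d i j q = (\<Sum>k\<in>UNIV. Gf (2/(q$1)) 0 (1/(3*c*(q$1)^2)) a b d i j $ k *\<^sub>R PB c a b d e g k q)
                     + (blk (-12*c*(q$1)^2) (4*(q$1)) a b d $ i $ j / (-3*c)) *\<^sub>R axis 4 1"
  using exhaust_3[of i] exhaust_3[of j] t c
  by (auto simp: PB2_def PB_def Gf_def Qf_def blk_entry sum_3 vec_eq_iff forall_4 axis_def ax3
                 field_simps power2_eq_square power3_eq_cube)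


lemma diffon_poly: "(\<And>x. x \<in> S \<Longrightarrow> f differentiable at x) \<Longrightarrow> f differentiable_on S"
  by (rule differentiable_at_imp_differentiable_on)

lemmas dI = differentiable_add differentiable_diff differentiable_mult differentiable_const
  differentiable_power differentiable_minus differentiable_vec_nth

lemma case2:
  fixes f :: "real \<Rightarrow> real \<Rightarrow> real"
  assumes N: "open N" and Q: "a*d - b^2 = -1" and c: "c \<noteq> 0"
    and fN: "\<forall>(v,w)\<in>N. f v w = (a * v\<^sup>2 + 2 * b * v * w + d * w\<^sup>2) / 2 + e * v + g * w + k"
  shows "improper_affine_hypersphere {p. p$1 > 0 \<and> (p$2, p$3) \<in> N} (\<lambda>p. vector [p$2, p$3, f (p$2) (p$3) + c * (p$1)^3, (p$1)^4])
       \<and> indefinite_hypersurface {p. p$1 > 0 \<and> (p$2, p$3) \<in> N} (\<lambda>p. vector [p$2, p$3, f (p$2) (p$3) + c * (p$1)^3, (p$1)^4])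
       \<and> pointwise_symmetry {p. p$1 > 0 \<and> (p$2, p$3) \<in> N} (\<lambda>p. vector [p$2, p$3, f (p$2) (p$3) + c * (p$1)^3, (p$1)^4]) SO11"
proof -
  define U where "U = {p::real^3. p$1 > 0 \<and> (p$2, p$3) \<in> N}"
  define \<phi> :: "real^3 \<Rightarrow> real^4" where "\<phi> = (\<lambda>p. vector [p$2, p$3, f (p$2) (p$3) + c * (p$1)^3, (p$1)^4])"
  define m where "m = root 5 (192 * \<bar>c\<bar>)"
  have Uo: "open U" unfolding U_def by (rule open_U[OF N])
  have m0: "m > 0" unfolding m_def using c by simp
  have m5: "m^5 = 192 * \<bar>c\<bar>" unfolding m_def by (rule real_root_pow_pos2) auto
  have \<phi>U: "\<phi> q = Phi2 c a b d e g k q" if "q \<in> U" for q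
  proof -
    have "(q$2, q$3) \<in> N" using that unfolding U_def by simp
    then have "f (q$2) (q$3) = FF a b d e g k (q$2) (q$3)" using fN unfolding FF_def by auto
    then show ?thesis unfolding \<phi>_def Phi2_def by simp
  qed
  have pdP: "\<forall>q\<in>U. \<forall>j. pd \<phi> j q = PB c a b d e g j q"
  proof (intro ballI allI)
    fix q j assume q: "q \<in> U"
    have "pd \<phi> j q = pd (Phi2 c a b d e g k) j q" by (rule pd_local[OF Uo q \<phi>U])
    then show "pd \<phi> j q = PB c a b d e g j q" by (simp add: pd_Phi2)
  qed
  have pdP2: "\<forall>q\<in>U. \<forall>i j. pd (pd \<phi> j) i q = PB2 c a b d i j q"
  proof (intro ballI allI)
    fix q i j assume q: "q \<in> U"
    have "pd (pd \<phi> j) i q = pd (PB c a b d e g j) i q"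
      by (rule pd_local[OF Uo q]) (use pdP in blast)
    then show "pd (pd \<phi> j) i q = PB2 c a b d i j q" by (simp add: pd_PB)
  qed
  have Pd: "\<forall>j. PB c a b d e g j differentiable_on U"
  proof
    fix j :: 3
    show "PB c a b d e g j differentiable_on U"
      using exhaust_3[of j] unfolding PB_def
      by (elim disjE; simp add: ax3; intro diffon_poly differentiable_vector4 dI)
  qed
  have Phid: "Phi2 c a b d e g k differentiable_on U"
    unfolding Phi2_def FF_def by (intro diffon_poly differentiable_vector4 dI differentiable_divide) simp_all
  have \<phi>d: "\<phi> differentiable_on U"
    by (rule differentiable_on_transform_open[OF Phid Uo]) (simp add: \<phi>U)
  have Hd: "\<forall>i j. (\<lambda>q. blk (-12*c*(q$1)^2) (4*(q$1)) a b d $ i $ j) differentiable_on U"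
    unfolding blk_entry by (intro allI dif_if diffon_poly dI)
  have \<Omega>cont: "continuous_on U (OmB c a b d e g)"
    unfolding OmB_def by (intro cont_vector4 continuous_intros)
  have main: "improper_affine_hypersphere U \<phi> \<and> indefinite_hypersurface U \<phi> \<and> pointwise_symmetry U \<phi> SO11"
  proof (rule main_generic[where P="PB c a b d e g" and Psec="PB2 c a b d" and \<Omega>="OmB c a b d e g"
        and d\<Omega>="dOmB a b d e g" and Af="\<lambda>t. -12*c*t^2" and Bf="\<lambda>t. 4*t" and Af'="\<lambda>t. -24*c*t"
        and Bf'="\<lambda>t. 4" and gA="\<lambda>t. 2/t" and gB="\<lambda>t. 0" and gC="\<lambda>t. 1/(3*c*t^2)"
        and \<rho>="\<lambda>q. - ((q$1)^2)" and m=m and \<nu>="-3*c" and n="axis 4 1", OF Uo \<phi>d pdP Pd pdP2])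
    show "\<forall>q\<in>U. \<forall>x::real^3. (\<Sum>k\<in>UNIV. x$k *\<^sub>R PB c a b d e g k q) = 0 \<longrightarrow> x = 0"
    proof
      fix q assume "q \<in> U"
      then have "q$1 \<noteq> 0" unfolding U_def by simp
      then show "\<forall>x::real^3. (\<Sum>k\<in>UNIV. x$k *\<^sub>R PB c a b d e g k q) = 0 \<longrightarrow> x = 0"
        by (rule indepB[OF _ c])
    qed
    show "\<forall>q\<in>U. \<forall>k. OmB c a b d e g q \<bullet> PB c a b d e g k q = 0" by (simp add: OmB_P)
    show "\<forall>q\<in>U. \<forall>i j. OmB c a b d e g q \<bullet> PB2 c a b d i j q = blk (-12*c*(q$1)^2) (4*(q$1)) a b d $ i $ j"
      by (simp add: OmB_P2)
    show "\<forall>q\<in>U. -12*c*(q$1)^2 \<noteq> 0 \<and> 4*(q$1) \<noteq> 0" using c unfolding U_def by auto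
    show "\<forall>q\<in>U. \<forall>x. det (rows4 (PB c a b d e g 1 q) (PB c a b d e g 2 q) (PB c a b d e g 3 q) x) = (- ((q$1)^2)) * (OmB c a b d e g q \<bullet> x)"
      by (simp add: fdB)
    show "\<forall>q\<in>U. (- ((q$1)^2)) ^ 2 * m ^ 5 = \<bar>det (blk (-12*c*(q$1)^2) (4*(q$1)) a b d)\<bar>"
      using detB[OF Q] m5 by (simp add: algebra_simps eval_nat_numeral)
    show "\<forall>q\<in>U. - ((q$1)^2) \<noteq> 0" unfolding U_def by auto
    show "m > 0" by (rule m0)
    show "\<forall>q\<in>U. \<forall>i. ((\<lambda>s. OmB c a b d e g (q + s *\<^sub>R axis i 1)) has_vector_derivative dOmB a b d e g i q) (at 0)"
      by (simp add: dOmB)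
    show "\<forall>q\<in>U. \<forall>x. (\<forall>i. dOmB a b d e g i q \<bullet> x = 0) \<longrightarrow> (\<exists>r. x = r *\<^sub>R axis 4 1)"
    proof
      fix q assume "q \<in> U"
      then have "q$1 \<noteq> 0" unfolding U_def by simp
      then show "\<forall>x. (\<forall>i. dOmB a b d e g i q \<bullet> x = 0) \<longrightarrow> (\<exists>r. x = r *\<^sub>R axis 4 1)"
        by (rule spanB[OF _ Q])
    qed
    show "\<forall>q\<in>U. OmB c a b d e g q \<bullet> axis 4 1 = -3*c" by (simp add: OmB_def inner_axis)
    show "-3*c \<noteq> 0" using c by simp
    show "continuous_on U (OmB c a b d e g)" by (rule \<Omega>cont)
    show "\<forall>i j. (\<lambda>q. blk (-12*c*(q$1)^2) (4*(q$1)) a b d $ i $ j) differentiable_on U" by (rule Hd)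
    show "\<forall>q\<in>U. \<forall>i j. PB2 c a b d i j q = (\<Sum>k\<in>UNIV. Gf (2/(q$1)) 0 (1/(3*c*(q$1)^2)) a b d i j $ k *\<^sub>R PB c a b d e g k q)
                     + (blk (-12*c*(q$1)^2) (4*(q$1)) a b d $ i $ j / (-3*c)) *\<^sub>R axis 4 1"
      using GeqB c unfolding U_def by auto
    show "\<forall>q\<in>U. ((\<lambda>t. -12*c*t^2) has_real_derivative -24*c*(q$1)) (at (q$1))"
      by (auto intro!: derivative_eq_intros)
    show "\<forall>q\<in>U. ((\<lambda>t. 4*t) has_real_derivative 4) (at (q$1))"
      by (auto intro!: derivative_eq_intros)
    show "\<forall>q\<in>U. 0 - 4/(2*(4*(q$1))) = -(2/(q$1) - (-24*c*(q$1))/(2*(-12*c*(q$1)^2)))/2"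
      using c unfolding U_def by (auto simp: field_simps power2_eq_square)
    show "\<forall>q\<in>U. 2/(q$1) - (-24*c*(q$1))/(2*(-12*c*(q$1)^2)) \<noteq> 0"
      using c unfolding U_def by (auto simp: field_simps power2_eq_square)
    show "a*d - b^2 = -1" by (rule Q)
  qed
  then show ?thesis unfolding U_def \<phi>_def .
qed


definition Phi1 :: "real \<Rightarrow> real\<Rightarrow>real\<Rightarrow>real\<Rightarrow>real\<Rightarrow>real\<Rightarrow>real \<Rightarrow> real^3 \<Rightarrow> real^4" where
  "Phi1 c a b d e g k q = vector [q$1 * q$2, q$1 * q$3, q$1 * FF a b d e g k (q$2) (q$3) - c * (q$1)^4, q$1]"

definition PA :: "real \<Rightarrow> real\<Rightarrow>real\<Rightarrow>real\<Rightarrow>real\<Rightarrow>real\<Rightarrow>real \<Rightarrow> 3 \<Rightarrow> real^3 \<Rightarrow> real^4" where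
  "PA c a b d e g k j q = (if j = 1 then vector [q$2, q$3, FF a b d e g k (q$2) (q$3) - 4*c*(q$1)^3, 1]
     else if j = 2 then vector [q$1, 0, q$1*(a*q$2 + b*q$3 + e), 0] else vector [0, q$1, q$1*(b*q$2 + d*q$3 + g), 0])"

definition PA2 :: "real \<Rightarrow> real\<Rightarrow>real\<Rightarrow>real\<Rightarrow>real\<Rightarrow>real \<Rightarrow> 3 \<Rightarrow> 3 \<Rightarrow> real^3 \<Rightarrow> real^4" where
  "PA2 c a b d e g i j q = (if i = 1 \<and> j = 1 then vector [0, 0, -12*c*(q$1)^2, 0]
     else if (i = 1 \<and> j = 2) \<or> (i = 2 \<and> j = 1) then vector [1, 0, a*q$2 + b*q$3 + e, 0]
     else if (i = 1 \<and> j = 3) \<or> (i = 3 \<and> j = 1) then vector [0, 1, b*q$2 + d*q$3 + g, 0]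
     else vector [0, 0, q$1 * Qf a b d i j, 0])"

definition OmA :: "real \<Rightarrow> real\<Rightarrow>real\<Rightarrow>real\<Rightarrow>real\<Rightarrow>real\<Rightarrow>real \<Rightarrow> real^3 \<Rightarrow> real^4" where
  "OmA c a b d e g k q = vector [-(a*q$2 + b*q$3 + e), -(b*q$2 + d*q$3 + g), 1,
      q$2*(a*q$2 + b*q$3 + e) + q$3*(b*q$2 + d*q$3 + g) - FF a b d e g k (q$2) (q$3) + 4*c*(q$1)^3]"

definition dOmA :: "real\<Rightarrow>real\<Rightarrow>real\<Rightarrow>real \<Rightarrow> 3 \<Rightarrow> real^3 \<Rightarrow> real^4" where
  "dOmA c a b d i q = (if i = 1 then vector [0, 0, 0, 12*c*(q$1)^2]
     else if i = 2 then vector [-a, -b, 0, a*q$2 + b*q$3] else vector [-b, -d, 0, b*q$2 + d*q$3])"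

lemma pd_Phi1: "pd (Phi1 c a b d e g k) j q = PA c a b d e g k j q"
  using exhaust_3[of j]
  unfolding Phi1_def FF_def PA_def
  apply (elim disjE)
  apply (simp_all add: ax3)
  apply (auto intro!: pd_vec4 derivative_eq_intros simp: coord_line axis_def algebra_simps)
  done

lemma pd_PA: "pd (PA c a b d e g k j) i q = PA2 c a b d e g i j q"
  using exhaust_3[of j] exhaust_3[of i]
  unfolding PA_def PA2_def Qf_def FF_def
  apply (elim disjE)
  apply (simp_all add: ax3)
  apply (auto intro!: pd_vec4 derivative_eq_intros simp: coord_line axis_def algebra_simps)
  done

lemma dOmA: "((\<lambda>s. OmA c a b d e g k (q + s *\<^sub>R axis i 1)) has_vector_derivative dOmA c a b d i q) (at 0)"
  using exhaust_3[of i]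
  unfolding OmA_def dOmA_def FF_def
  apply (elim disjE)
  apply (simp_all add: ax3)
  apply (auto intro!: hvd4 derivative_eq_intros simp: coord_line axis_def algebra_simps)
  done

lemma indepA:
  assumes t: "q$1 \<noteq> 0"
  shows "\<forall>x::real^3. (\<Sum>k\<in>UNIV. x$k *\<^sub>R PA c a b d e g k' k q) = 0 \<longrightarrow> x = 0"
proof (intro allI impI)
  fix x :: "real^3"
  assume "(\<Sum>k\<in>UNIV. x$k *\<^sub>R PA c a b d e g k' k q) = 0"
  then have e: "(\<Sum>k\<in>UNIV. x$k *\<^sub>R PA c a b d e g k' k q) $ m = 0" for m by simp
  have x1: "x$1 = 0" using e[of 4] by (simp add: sum_3 PA_def ax3)
  have "x$2 = 0" using e[of 1] t x1 by (simp add: sum_3 PA_def ax3)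
  moreover have "x$3 = 0" using e[of 2] t x1 by (simp add: sum_3 PA_def ax3)
  ultimately show "x = 0" using x1 by (simp add: vec_eq_iff forall_3)
qed

lemma OmA_P: "OmA c a b d e g k q \<bullet> PA c a b d e g k j q = 0"
  using exhaust_3[of j]
  by (auto simp: OmA_def PA_def inner_vec_def sum_4 ax3 algebra_simps)

lemma OmA_P2: "OmA c a b d e g k q \<bullet> PA2 c a b d e g i j q = blk (-12*c*(q$1)^2) (q$1) a b d $ i $ j"
  using exhaust_3[of i] exhaust_3[of j]
  by (auto simp: OmA_def PA2_def blk_entry Qf_def inner_vec_def sum_4 ax3 algebra_simps)

lemma fdA: "det (rows4 (PA c a b d e g k 1 q) (PA c a b d e g k 2 q) (PA c a b d e g k 3 q) x)
   = (- ((q$1)^2)) * (OmA c a b d e g k q \<bullet> x)"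
  by (simp add: det_4 rows4_nth PA_def OmA_def inner_vec_def sum_4 ax3 algebra_simps power2_eq_square power3_eq_cube)

lemma detA:
  assumes Q: "a*d - b^2 = -1"
  shows "\<bar>det (blk (-12*c*t^2) t a b d)\<bar> = 12 * \<bar>c\<bar> * t^4"
proof -
  have "det (blk (-12*c*t^2) t a b d) = (-12*c*t^2) * (t^2) * (a*d - b^2)"
    by (simp add: det_3 blk_nth algebra_simps power2_eq_square)
  also have "\<dots> = 12 * c * t^4" unfolding Q by (simp add: algebra_simps eval_nat_numeral)
  finally show ?thesis by (simp add: abs_mult)
qed

lemma spanA:
  assumes t: "q$1 \<noteq> 0" and c: "c \<noteq> 0" and Q: "a*d - b^2 = -1"
  shows "\<forall>x. (\<forall>i. dOmA c a b d i q \<bullet> x = 0) \<longrightarrow> (\<exists>r. x = r *\<^sub>R axis 3 1)"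
proof (intro allI impI)
  fix x :: "real^4"
  assume h: "\<forall>i. dOmA c a b d i q \<bullet> x = 0"
  have "12*c*(q$1)^2*x$4 = 0" using h[rule_format, of 1]
    by (simp add: dOmA_def inner_vec_def sum_4 ax3 algebra_simps)
  then have x4: "x$4 = 0" using t c by simp
  have h2: "-a*x$1 - b*x$2 = 0" using h[rule_format, of 2] x4
    by (simp add: dOmA_def inner_vec_def sum_4 ax3 algebra_simps)
  have h3: "-b*x$1 - d*x$2 = 0" using h[rule_format, of 3] x4
    by (simp add: dOmA_def inner_vec_def sum_4 ax3 algebra_simps)
  have x1: "x$1 = 0" using h2 h3 Q by algebra
  have x2: "x$2 = 0" using h2 h3 Q by algebra
  have "x = x$3 *\<^sub>R axis 3 1" using x1 x2 x4 by (simp add: vec_eq_iff forall_4 axis_def)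
  then show "\<exists>r. x = r *\<^sub>R axis 3 1" by blast
qed

lemma GeqA:
  assumes t: "q$1 \<noteq> 0"
  shows "PA2 c a b d e g i j q = (\<Sum>k\<in>UNIV. Gf 0 (1/(q$1)) 0 a b d i j $ k *\<^sub>R PA c a b d e g k' k q)
                     + (blk (-12*c*(q$1)^2) (q$1) a b d $ i $ j / 1) *\<^sub>R axis 3 1"
  using exhaust_3[of i] exhaust_3[of j] t
  by (auto simp: PA2_def PA_def Gf_def Qf_def blk_entry sum_3 vec_eq_iff forall_4 axis_def ax3
                 field_simps)

lemma case1:
  fixes f :: "real \<Rightarrow> real \<Rightarrow> real"
  assumes N: "open N" and Q: "a*d - b^2 = -1" and c: "c \<noteq> 0"
    and fN: "\<forall>(v,w)\<in>N. f v w = (a * v\<^sup>2 + 2 * b * v * w + d * w\<^sup>2) / 2 + e * v + g * w + k"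
  shows "improper_affine_hypersphere {p. p$1 > 0 \<and> (p$2, p$3) \<in> N} (\<lambda>p. vector [p$1 * p$2, p$1 * p$3, p$1 * f (p$2) (p$3) - c * (p$1)^4, p$1])
       \<and> indefinite_hypersurface {p. p$1 > 0 \<and> (p$2, p$3) \<in> N} (\<lambda>p. vector [p$1 * p$2, p$1 * p$3, p$1 * f (p$2) (p$3) - c * (p$1)^4, p$1])
       \<and> pointwise_symmetry {p. p$1 > 0 \<and> (p$2, p$3) \<in> N} (\<lambda>p. vector [p$1 * p$2, p$1 * p$3, p$1 * f (p$2) (p$3) - c * (p$1)^4, p$1]) SO11"
proof -
  define U where "U = {p::real^3. p$1 > 0 \<and> (p$2, p$3) \<in> N}"
  define \<phi> :: "real^3 \<Rightarrow> real^4" where "\<phi> = (\<lambda>p. vector [p$1 * p$2, p$1 * p$3, p$1 * f (p$2) (p$3) - c * (p$1)^4, p$1])"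
  define m where "m = root 5 (12 * \<bar>c\<bar>)"
  have Uo: "open U" unfolding U_def by (rule open_U[OF N])
  have m0: "m > 0" unfolding m_def using c by simp
  have m5: "m^5 = 12 * \<bar>c\<bar>" unfolding m_def by (rule real_root_pow_pos2) auto
  have \<phi>U: "\<phi> q = Phi1 c a b d e g k q" if "q \<in> U" for q
  proof -
    have "(q$2, q$3) \<in> N" using that unfolding U_def by simp
    then have "f (q$2) (q$3) = FF a b d e g k (q$2) (q$3)" using fN unfolding FF_def by auto
    then show ?thesis unfolding \<phi>_def Phi1_def by simp
  qed
  have pdP: "\<forall>q\<in>U. \<forall>j. pd \<phi> j q = PA c a b d e g k j q"
  proof (intro ballI allI)
    fix q j assume q: "q \<in> U"
    have "pd \<phi> j q = pd (Phi1 c a b d e g k) j q" by (rule pd_local[OF Uo q \<phi>U])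
    then show "pd \<phi> j q = PA c a b d e g k j q" by (simp add: pd_Phi1)
  qed
  have pdP2: "\<forall>q\<in>U. \<forall>i j. pd (pd \<phi> j) i q = PA2 c a b d e g i j q"
  proof (intro ballI allI)
    fix q i j assume q: "q \<in> U"
    have "pd (pd \<phi> j) i q = pd (PA c a b d e g k j) i q"
      by (rule pd_local[OF Uo q]) (use pdP in blast)
    then show "pd (pd \<phi> j) i q = PA2 c a b d e g i j q" by (simp add: pd_PA)
  qed
  have Pd: "\<forall>j. PA c a b d e g k j differentiable_on U"
  proof
    fix j :: 3
    show "PA c a b d e g k j differentiable_on U"
      using exhaust_3[of j] unfolding PA_def FF_def
      by (elim disjE; simp add: ax3; intro diffon_poly differentiable_vector4 dI differentiable_divide; simp)
  qed
  have Phid: "Phi1 c a b d e g k differentiable_on U"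
    unfolding Phi1_def FF_def by (intro diffon_poly differentiable_vector4 dI differentiable_divide) simp_all
  have \<phi>d: "\<phi> differentiable_on U"
    by (rule differentiable_on_transform_open[OF Phid Uo]) (simp add: \<phi>U)
  have Hd: "\<forall>i j. (\<lambda>q. blk (-12*c*(q$1)^2) (q$1) a b d $ i $ j) differentiable_on U"
    unfolding blk_entry by (intro allI dif_if diffon_poly dI)
  have \<Omega>cont: "continuous_on U (OmA c a b d e g k)"
  proof (rule differentiable_imp_continuous_on)
    show "OmA c a b d e g k differentiable_on U"
      unfolding OmA_def FF_def by (intro diffon_poly differentiable_vector4 dI differentiable_divide) simp_all
  qed
  have main: "improper_affine_hypersphere U \<phi> \<and> indefinite_hypersurface U \<phi> \<and> pointwise_symmetry U \<phi> SO11"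
  proof (rule main_generic[where P="PA c a b d e g k" and Psec="PA2 c a b d e g" and \<Omega>="OmA c a b d e g k"
        and d\<Omega>="dOmA c a b d" and Af="\<lambda>t. -12*c*t^2" and Bf="\<lambda>t. t" and Af'="\<lambda>t. -24*c*t"
        and Bf'="\<lambda>t. 1" and gA="\<lambda>t. 0" and gB="\<lambda>t. 1/t" and gC="\<lambda>t. 0"
        and \<rho>="\<lambda>q. - ((q$1)^2)" and m=m and \<nu>="1" and n="axis 3 1", OF Uo \<phi>d pdP Pd pdP2])
    show "\<forall>q\<in>U. \<forall>x::real^3. (\<Sum>l\<in>UNIV. x$l *\<^sub>R PA c a b d e g k l q) = 0 \<longrightarrow> x = 0"
    proof
      fix q assume "q \<in> U"
      then have "q$1 \<noteq> 0" unfolding U_def by simp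
      then show "\<forall>x::real^3. (\<Sum>l\<in>UNIV. x$l *\<^sub>R PA c a b d e g k l q) = 0 \<longrightarrow> x = 0"
        by (rule indepA)
    qed
    show "\<forall>q\<in>U. \<forall>l. OmA c a b d e g k q \<bullet> PA c a b d e g k l q = 0" by (simp add: OmA_P)
    show "\<forall>q\<in>U. \<forall>i j. OmA c a b d e g k q \<bullet> PA2 c a b d e g i j q = blk (-12*c*(q$1)^2) (q$1) a b d $ i $ j"
      by (simp add: OmA_P2)
    show "\<forall>q\<in>U. -12*c*(q$1)^2 \<noteq> 0 \<and> q$1 \<noteq> 0" using c unfolding U_def by auto
    show "\<forall>q\<in>U. \<forall>x. det (rows4 (PA c a b d e g k 1 q) (PA c a b d e g k 2 q) (PA c a b d e g k 3 q) x) = (- ((q$1)^2)) * (OmA c a b d e g k q \<bullet> x)"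
      by (simp add: fdA)
    show "\<forall>q\<in>U. (- ((q$1)^2)) ^ 2 * m ^ 5 = \<bar>det (blk (-12*c*(q$1)^2) (q$1) a b d)\<bar>"
      using detA[OF Q] m5 by (simp add: algebra_simps eval_nat_numeral)
    show "\<forall>q\<in>U. - ((q$1)^2) \<noteq> 0" unfolding U_def by auto
    show "m > 0" by (rule m0)
    show "\<forall>q\<in>U. \<forall>i. ((\<lambda>s. OmA c a b d e g k (q + s *\<^sub>R axis i 1)) has_vector_derivative dOmA c a b d i q) (at 0)"
      by (simp add: dOmA)
    show "\<forall>q\<in>U. \<forall>x. (\<forall>i. dOmA c a b d i q \<bullet> x = 0) \<longrightarrow> (\<exists>r. x = r *\<^sub>R axis 3 1)"
    proof
      fix q assume "q \<in> U"
      then have "q$1 \<noteq> 0" unfolding U_def by simp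
      then show "\<forall>x. (\<forall>i. dOmA c a b d i q \<bullet> x = 0) \<longrightarrow> (\<exists>r. x = r *\<^sub>R axis 3 1)"
        by (rule spanA[OF _ c Q])
    qed
    show "\<forall>q\<in>U. OmA c a b d e g k q \<bullet> axis 3 1 = 1" by (simp add: OmA_def FF_def inner_axis)
    show "(1::real) \<noteq> 0" by simp
    show "continuous_on U (OmA c a b d e g k)" by (rule \<Omega>cont)
    show "\<forall>i j. (\<lambda>q. blk (-12*c*(q$1)^2) (q$1) a b d $ i $ j) differentiable_on U" by (rule Hd)
    show "\<forall>q\<in>U. \<forall>i j. PA2 c a b d e g i j q = (\<Sum>l\<in>UNIV. Gf 0 (1/(q$1)) 0 a b d i j $ l *\<^sub>R PA c a b d e g k l q)
                     + (blk (-12*c*(q$1)^2) (q$1) a b d $ i $ j / 1) *\<^sub>R axis 3 1"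
      using GeqA unfolding U_def by auto
    show "\<forall>q\<in>U. ((\<lambda>t. -12*c*t^2) has_real_derivative -24*c*(q$1)) (at (q$1))"
      by (auto intro!: derivative_eq_intros)
    show "\<forall>q\<in>U. ((\<lambda>t. t) has_real_derivative 1) (at (q$1))"
      by (auto intro!: derivative_eq_intros)
    show "\<forall>q\<in>U. 1/(q$1) - 1/(2*(q$1)) = -(0 - (-24*c*(q$1))/(2*(-12*c*(q$1)^2)))/2"
      using c unfolding U_def by (auto simp: field_simps power2_eq_square)
    show "\<forall>q\<in>U. 0 - (-24*c*(q$1))/(2*(-12*c*(q$1)^2)) \<noteq> 0"
      using c unfolding U_def by (auto simp: field_simps power2_eq_square)
    show "a*d - b^2 = -1" by (rule Q)
  qed
  then show ?thesis unfolding U_def \<phi>_def .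
qed




theorem theorem8p21:
  fixes N :: "(real \<times> real) set" and f :: "real \<Rightarrow> real \<Rightarrow> real" and c :: real
    and \<phi> :: "real^3 \<Rightarrow> real^4"
  assumes "hyperbolic_paraboloid_graph N f"
    and "c \<noteq> 0"
    and "\<phi> = (\<lambda>p. vector [p$1 * p$2, p$1 * p$3, p$1 * f (p$2) (p$3) - c * (p$1)^4, p$1])
       \<or> \<phi> = (\<lambda>p. vector [p$2, p$3, f (p$2) (p$3) + c * (p$1)^3, (p$1)^4])"
  shows "improper_affine_hypersphere {p. p$1 > 0 \<and> (p$2, p$3) \<in> N} \<phi>
       \<and> indefinite_hypersurface {p. p$1 > 0 \<and> (p$2, p$3) \<in> N} \<phi>
       \<and> pointwise_symmetry {p. p$1 > 0 \<and> (p$2, p$3) \<in> N} \<phi> SO11"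
proof -
  have N: "open N" using assms(1) unfolding hyperbolic_paraboloid_graph_def by blast
  obtain a b d e g k where Q: "a * d - b\<^sup>2 = -1"
    and fN: "\<forall>(v,w)\<in>N. f v w = (a * v\<^sup>2 + 2 * b * v * w + d * w\<^sup>2) / 2 + e * v + g * w + k"
    using assms(1) unfolding hyperbolic_paraboloid_graph_def by blast
  from assms(3) show ?thesis
  proof
    assume "\<phi> = (\<lambda>p. vector [p$1 * p$2, p$1 * p$3, p$1 * f (p$2) (p$3) - c * (p$1)^4, p$1])"
    then show ?thesis using case1[OF N Q assms(2) fN] by simp
  next
    assume "\<phi> = (\<lambda>p. vector [p$2, p$3, f (p$2) (p$3) + c * (p$1)^3, (p$1)^4])"
    then show ?thesis using case2[OF N Q assms(2) fN] by simp
  qed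
qed

end
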